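(* Let $\rho, \alpha,\gamma > 0$ with $\rho + \alpha \leq \frac{1}{100}$ and $\gamma \leq \frac{1}{30}$. Let $G$ be an $(n,d,\lambda)$-graph with $n$ even and $\lambda \leq \frac{d}{12}$. Then for every balanced bipartition $\{X,Y\}$ of $V(G)$, the bipartite graph $G[X,Y]$ is $(d,\rho,\alpha,\gamma)$-good.
   Context: For a graph $G$ on $n$ vertices with adjacency matrix eigenvalues $\lambda_1\geq\dots\geq\lambda_n$, $\lambda(G):=\max\{|\lambda_2|,|\lambda_n|\}$; an $(n,d,\lambda)$-graph is a $d$-regular simple graph on $n$ vertices with $\lambda(G)\leq\lambda$. A balanced bipartition $\{X,Y\}$ has $|X|=|Y|$. For disjoint $X,Y$, $G[X,Y]$ is the bipartite graph on $X\cup Y$ of all edges of $G$ between $X$ and $Y$. For a function $f:V(H)\to\mathbb N$, an $f$-factor of $H$ is a spanning subgraph in which every vertex $v$ has degree exactly $f(v)$; for $S\subseteq V(H)$, $f(S):=\sum_{v\in S}f(v)$. For a subgraph $F\subseteq H$, $H\setminus F$ is the spanning subgraph with edge set $E(H)\setminus E(F)$. Definition (robustly matchable): a balanced bipartite graph $H=(X\cup Y,E)$ is $(d,\rho,\alpha,\gamma)$-robustly matchable if for every subgraph $F\subseteq H$ of maximum degree at most $\rho d$ and every real $0<\alpha'\leq\alpha$, the graph $H\setminus F$ has an $f$-factor for every integer-valued function $f:X\cup Y\to[(1-\gamma)\alpha' d,\alpha' d]$ with $f(X)=f(Y)$. Definition (good): a balanced bipartite graph $H=(X\cup Y,E)$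 is $(d,\rho,\alpha,\gamma)$-good if for all $X'\subseteq X$, $Y'\subseteq Y$ with $|X'|=|Y'|$ and minimum degree $\delta(H[X',Y'])\geq\frac d5$, the graph $H[X',Y']$ is $(d,\rho,\alpha,\gamma)$-robustly matchable. *)

theory Defs
  imports "Jordan_Normal_Form.Char_Poly" "HOL-Computational_Algebra.Polynomial" "HOL-Library.Multiset"
begin

definition simple_graph :: "nat \<Rightarrow> (nat \<Rightarrow> nat \<Rightarrow> bool) \<Rightarrow> bool" where
  "simple_graph n E \<longleftrightarrow> (\<forall>u v. E u v \<longrightarrow> u < n \<and> v < n) \<and> (\<forall>u v. E u v \<longrightarrow> E v u) \<and> (\<forall>v. \<not> E v v)"

definition regular :: "nat \<Rightarrow> (nat \<Rightarrow> nat \<Rightarrow> bool) \<Rightarrow> nat \<Rightarrow> bool" where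
  "regular n E d \<longleftrightarrow> (\<forall>v < n. card {u. u < n \<and> E v u} = d)"

definition adj_matrix :: "nat \<Rightarrow> (nat \<Rightarrow> nat \<Rightarrow> bool) \<Rightarrow> real mat" where
  "adj_matrix n E = mat n n (\<lambda>(i, j). if E i j then 1 else 0)"

text \<open>Eigenvalues with multiplicity (roots of the characteristic polynomial), in non-increasing order
  lambda_1 >= ... >= lambda_n (list index 0 .. n-1).\<close>
definition eigs :: "nat \<Rightarrow> (nat \<Rightarrow> nat \<Rightarrow> bool) \<Rightarrow> real list" where
  "eigs n E = rev (sorted_list_of_multiset (proots (char_poly (adj_matrix n E))))"

definition graph_lambda :: "nat \<Rightarrow> (nat \<Rightarrow> nat \<Rightarrow> bool) \<Rightarrow> real" where
  "graph_lambda n E = max \<bar>eigs n E ! 1\<bar> \<bar>eigs n E ! (n - 1)\<bar>"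

definition ndl_graph :: "nat \<Rightarrow> nat \<Rightarrow> real \<Rightarrow> (nat \<Rightarrow> nat \<Rightarrow> bool) \<Rightarrow> bool" where
  "ndl_graph n d lam E \<longleftrightarrow> simple_graph n E \<and> regular n E d \<and> graph_lambda n E \<le> lam"

text \<open>Bipartite graphs: edge sets are sets of pairs (x,y) with x in X and y in Y.
  G[X,Y] is the bipartite graph of all edges of G between X and Y.\<close>
definition bip_edges :: "(nat \<Rightarrow> nat \<Rightarrow> bool) \<Rightarrow> nat set \<Rightarrow> nat set \<Rightarrow> (nat \<times> nat) set" where
  "bip_edges E X Y = {(x, y). x \<in> X \<and> y \<in> Y \<and> E x y}"

definition bdeg :: "(nat \<times> nat) set \<Rightarrow> nat \<Rightarrow> nat" where
  "bdeg S v = card {u. (v, u) \<in> S} + card {u. (u, v) \<in> S}"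

definition is_f_factor :: "nat set \<Rightarrow> nat set \<Rightarrow> (nat \<times> nat) set \<Rightarrow> (nat \<Rightarrow> nat) \<Rightarrow> (nat \<times> nat) set \<Rightarrow> bool" where
  "is_f_factor X Y H f S \<longleftrightarrow> S \<subseteq> H \<and> (\<forall>v \<in> X \<union> Y. bdeg S v = f v)"

definition robustly_matchable ::
  "nat set \<Rightarrow> nat set \<Rightarrow> (nat \<times> nat) set \<Rightarrow> real \<Rightarrow> real \<Rightarrow> real \<Rightarrow> real \<Rightarrow> bool" where
  "robustly_matchable X Y H d \<rho> \<alpha> \<gamma> \<longleftrightarrow>
     (\<forall>F \<alpha>'. F \<subseteq> H \<and> (\<forall>v \<in> X \<union> Y. real (bdeg F v) \<le> \<rho> * d) \<and> 0 < \<alpha>' \<and> \<alpha>' \<le> \<alpha> \<longrightarrow>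
       (\<forall>f :: nat \<Rightarrow> nat.
          (\<forall>v \<in> X \<union> Y. (1 - \<gamma>) * \<alpha>' * d \<le> real (f v) \<and> real (f v) \<le> \<alpha>' * d) \<and>
          (\<Sum>v\<in>X. f v) = (\<Sum>v\<in>Y. f v) \<longrightarrow>
          (\<exists>S. is_f_factor X Y (H - F) f S)))"

definition good :: "nat set \<Rightarrow> nat set \<Rightarrow> (nat \<times> nat) set \<Rightarrow> real \<Rightarrow> real \<Rightarrow> real \<Rightarrow> real \<Rightarrow> bool" where
  "good X Y H d \<rho> \<alpha> \<gamma> \<longleftrightarrow>
     (\<forall>X' Y'. X' \<subseteq> X \<and> Y' \<subseteq> Y \<and> card X' = card Y' \<and>
        (\<forall>v \<in> X' \<union> Y'. real (bdeg (H \<inter> (X' \<times> Y')) v) \<ge> d / 5) \<longrightarrow>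
        robustly_matchable X' Y' (H \<inter> (X' \<times> Y')) d \<rho> \<alpha> \<gamma>)"

end

theory Submission
  imports Defs "Jordan_Normal_Form.Schur_Decomposition"
begin


lemma real_sym_eigenvalue:
  fixes A :: "real mat"
  assumes A: "A \<in> carrier_mat n n" and sym: "\<And>i j. i<n \<Longrightarrow> j<n \<Longrightarrow> A$$(i,j) = A$$(j,i)" and n: "n > 0"
  shows "\<exists>e. eigenvalue A e"
proof -
  let ?Ac = "map_mat complex_of_real A"
  have Ac: "?Ac \<in> carrier_mat n n" using A by simp
  have cp: "char_poly ?Ac = map_poly of_real (char_poly A)" by (rule of_real_hom.char_poly_hom[OF A])
  have deg: "degree (char_poly ?Ac) = n" using degree_monic_char_poly[OF Ac] by simp
  then have "\<not> constant (poly (char_poly ?Ac))" using n by (simp add: constant_degree)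
  then obtain \<mu> where mu: "poly (char_poly ?Ac) \<mu> = 0" using fundamental_theorem_of_algebra by blast
  then have "eigenvalue ?Ac \<mu>" using eigenvalue_root_char_poly[OF Ac] by simp
  then obtain v where ev: "eigenvector ?Ac v \<mu>" unfolding eigenvalue_def by blast
  hence v: "v \<in> carrier_vec n" "v \<noteq> 0\<^sub>v n" "?Ac *\<^sub>v v = \<mu> \<cdot>\<^sub>v v" unfolding eigenvector_def using Ac by auto
  have eq: "(\<Sum>j<n. of_real (A$$(i,j)) * v$j) = \<mu> * v$i" if i: "i<n" for i
  proof -
    have "(?Ac *\<^sub>v v) $ i = (\<mu> \<cdot>\<^sub>v v) $ i" using v(3) by simp
    moreover have "(?Ac *\<^sub>v v) $ i = (\<Sum>j<n. of_real (A$$(i,j)) * v$j)"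
      using i A v(1) by (auto simp: scalar_prod_def lessThan_atLeast0 intro!: sum.cong)
    moreover have "(\<mu> \<cdot>\<^sub>v v) $ i = \<mu> * v$i" using i v(1) by auto
    ultimately show ?thesis by simp
  qed
  define s where "s = (\<Sum>i<n. \<Sum>j<n. cnj (v$i) * of_real (A$$(i,j)) * v$j)"
  define N where "N = (\<Sum>i<n. cnj (v$i) * v$i)"
  have s1: "s = \<mu> * N"
  proof -
    have "s = (\<Sum>i<n. cnj (v$i) * (\<Sum>j<n. of_real (A$$(i,j)) * v$j))"
      unfolding s_def by (simp add: sum_distrib_left mult.assoc)
    also have "\<dots> = (\<Sum>i<n. cnj (v$i) * (\<mu> * v$i))" by (intro sum.cong refl, simp add: eq)
    also have "\<dots> = \<mu> * N" unfolding N_def by (simp add: sum_distrib_left algebra_simps)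
    finally show ?thesis .
  qed
  have s2: "cnj s = s"
  proof -
    have "cnj s = (\<Sum>i<n. \<Sum>j<n. v$i * of_real (A$$(i,j)) * cnj (v$j))"
      unfolding s_def by (simp add: cnj_sum)
    also have "\<dots> = (\<Sum>j<n. \<Sum>i<n. v$i * of_real (A$$(i,j)) * cnj (v$j))" by (rule sum.swap)
    also have "\<dots> = s" unfolding s_def
      by (intro sum.cong refl, simp add: sym mult.commute mult.left_commute)
    finally show ?thesis .
  qed
  have Nr: "N = of_real (\<Sum>i<n. (cmod (v$i))^2)"
    unfolding N_def of_real_sum by (intro sum.cong refl) (metis complex_norm_square mult.commute)
  obtain i where i: "i < n" "v$i \<noteq> 0" using v(1,2) by (metis eq_vecI carrier_vecD index_zero_vec)
  have "(cmod (v$i))^2 > 0" using i by simp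
  moreover have "(cmod (v$i))^2 \<le> (\<Sum>i<n. (cmod (v$i))^2)"
    by (rule member_le_sum, insert i, auto)
  ultimately have Npos: "(\<Sum>i<n. (cmod (v$i))^2) > 0" by linarith
  have "cnj \<mu> * N = \<mu> * N" using s1 s2 Nr by (metis complex_cnj_complex_of_real complex_cnj_mult)
  moreover have "N \<noteq> 0" using Npos unfolding Nr by (metis of_real_eq_0_iff less_irrefl)
  ultimately have "cnj \<mu> = \<mu>" by simp
  hence mur: "\<mu> = of_real (Re \<mu>)" by (metis Reals_cnj_iff of_real_Re)
  have "of_real (poly (char_poly A) (Re \<mu>)) = (0::complex)"
    using mu unfolding cp by (subst (asm) mur, simp only: of_real_hom.poly_map_poly)
  hence "poly (char_poly A) (Re \<mu>) = 0" by simp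
  thus ?thesis using eigenvalue_root_char_poly[OF A] by blast
qed

lemma real_conjugate_vec[simp]: "conjugate (v :: real vec) = v"
  by (rule eq_vecI, auto)

lemma real_self_sprod_nonneg: "(v :: real vec) \<bullet> v \<ge> 0"
  unfolding scalar_prod_def by (intro sum_nonneg, auto)

lemma orth_ext:
  fixes u :: "real vec"
  assumes u: "u \<in> carrier_vec n" and u1: "u \<bullet> u = 1"
  shows "\<exists>W. W \<in> carrier_mat n n \<and> W\<^sup>T * W = 1\<^sub>m n \<and> col W 0 = u"
proof -
  have u0: "u \<noteq> 0\<^sub>v n" using u1 u by auto
  interpret cof_vec_space n "TYPE(real)" .
  define b where "b = basis_completion u"
  define ws where "ws = gram_schmidt n b"
  from basis_completion[OF u u0, folded b_def]
  have span_b: "span (set b) = carrier_vec n" and dist_b: "distinct b" 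
    and indep: "\<not> lin_dep (set b)" and b: "set b \<subseteq> carrier_vec n" and hdb: "hd b = u" 
    and len_b: "length b = n" by auto
  have n: "n > 0" using u0 u by (cases n, auto)
  from hdb len_b n obtain vs where bv: "b = u # vs" by (cases b, auto)
  from gram_schmidt_result[OF b dist_b indep refl, folded ws_def]
  have ws: "set ws \<subseteq> carrier_vec n" "corthogonal ws" "length ws = n" 
    by (auto simp: len_b)
  from gram_schmidt_hd[OF u, of vs, folded bv] have hdws: "hd ws = u" unfolding ws_def .
  have wsn: "ws ! i \<in> carrier_vec n" if "i < n" for i using ws that by auto
  have orth: "ws ! i \<bullet> ws ! j = 0 \<longleftrightarrow> i \<noteq> j" if "i < n" "j < n" for i j
    using corthogonalD[OF ws(2), of i j] that ws(3) by simp
  have pos: "ws ! i \<bullet> ws ! i > 0" if "i < n" for i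
    using orth[OF that that] real_self_sprod_nonneg[of "ws ! i"] by linarith
  define ws' where "ws' = map (\<lambda>w. (1 / sqrt (w \<bullet> w)) \<cdot>\<^sub>v w) ws"
  define W where "W = mat_of_cols n ws'"
  have ws'n: "ws' ! i = (1 / sqrt (ws ! i \<bullet> ws ! i)) \<cdot>\<^sub>v ws ! i" if "i < n" for i
    unfolding ws'_def using that ws(3) by simp
  have lws': "length ws' = n" unfolding ws'_def using ws(3) by simp
  have W: "W \<in> carrier_mat n n" unfolding W_def using mat_of_cols_carrier(1)[of n ws'] lws' by simp
  have colW: "col W i = ws' ! i" if "i < n" for i
    unfolding W_def by (rule col_mat_of_cols, insert that lws' ws'n wsn, auto)
  have "W\<^sup>T * W = 1\<^sub>m n"
  proof (rule eq_matI)
    fix i j assume i: "i < dim_row (1\<^sub>m n)" and j: "j < dim_col (1\<^sub>m n)"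
    hence i: "i < n" and j: "j < n" by auto
    have "(W\<^sup>T * W) $$ (i, j) = col W i \<bullet> col W j" using i j W by (simp add: row_transpose)
    also have "\<dots> = (1 / sqrt (ws ! i \<bullet> ws ! i)) * (1 / sqrt (ws ! j \<bullet> ws ! j)) * (ws ! i \<bullet> ws ! j)"
      using i j wsn[OF i] wsn[OF j] by (simp add: colW ws'n)
    also have "\<dots> = 1\<^sub>m n $$ (i, j)"
    proof (cases "i = j")
      case True
      have "sqrt (ws ! i \<bullet> ws ! i) * sqrt (ws ! i \<bullet> ws ! i) = ws ! i \<bullet> ws ! i"
        using pos[OF i] by simp
      with pos[OF i] True show ?thesis using i by (simp add: field_simps)
    next
      case False
      with orth[OF i j] show ?thesis using i j by simp
    qed
    finally show "(W\<^sup>T * W) $$ (i, j) = 1\<^sub>m n $$ (i, j)" .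
  qed (insert W, auto)
  moreover have "col W 0 = u"
  proof -
    have "ws ! 0 = u" using hdws ws(3) n by (cases ws, auto)
    thus ?thesis using colW[OF n] ws'n[OF n] u1 by simp
  qed
  ultimately show ?thesis using W by blast
qed

definition dmat :: "real list \<Rightarrow> real mat" where
  "dmat es = mat (length es) (length es) (\<lambda>(i,j). if i = j then es ! i else 0)"

lemma dmat_carrier[simp]: "dmat es \<in> carrier_mat (length es) (length es)"
  unfolding dmat_def by simp

lemma dmat_Cons: "dmat (e # es) = four_block_mat (mat 1 1 (\<lambda>_. e)) (0\<^sub>m 1 (length es)) (0\<^sub>m (length es) 1) (dmat es)"
  by (rule eq_matI, auto simp: dmat_def)

lemma spectral:
  fixes A :: "real mat"
  assumes "A \<in> carrier_mat n n" "A\<^sup>T = A"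
  shows "\<exists>P es. P \<in> carrier_mat n n \<and> length es = n \<and> P\<^sup>T * P = 1\<^sub>m n \<and> A = P * dmat es * P\<^sup>T"
  using assms
proof (induction n arbitrary: A)
  case 0
  show ?case
    by (rule exI[of _ "1\<^sub>m 0"], rule exI[of _ "[]"], insert 0, auto intro!: eq_matI)
next
  case (Suc m A)
  let ?n = "Suc m"
  have A: "A \<in> carrier_mat ?n ?n" and At: "A\<^sup>T = A" by fact+
  have sym: "A $$ (i,j) = A $$ (j,i)" if "i < ?n" "j < ?n" for i j
    using At that A by (metis carrier_matD index_transpose_mat(1))
  obtain e where e: "eigenvalue A e" using real_sym_eigenvalue[OF A sym] by auto
  define v where "v = find_eigenvector A e"
  have ev: "eigenvector A v e" unfolding v_def by (rule find_eigenvector[OF A e])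
  hence v: "v \<in> carrier_vec ?n" "v \<noteq> 0\<^sub>v ?n" "A *\<^sub>v v = e \<cdot>\<^sub>v v"
    unfolding eigenvector_def using A by auto
  have vv: "v \<bullet> v > 0"
  proof -
    obtain i where i: "i < ?n" "v $ i \<noteq> 0" using v(1,2) by (metis eq_vecI carrier_vecD index_zero_vec)
    have "(v $ i)^2 \<le> (\<Sum>j\<in>{0..<?n}. (v $ j)^2)" by (rule member_le_sum, insert i, auto)
    moreover have "v \<bullet> v = (\<Sum>j\<in>{0..<?n}. (v $ j)^2)" using v(1) 
      by (simp add: scalar_prod_def power2_eq_square)
    moreover have "(v $ i)^2 > 0" using i by simp
    ultimately show ?thesis by linarith
  qed
  define u where "u = (1 / sqrt (v \<bullet> v)) \<cdot>\<^sub>v v"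
  have u: "u \<in> carrier_vec ?n" unfolding u_def using v by simp
  have uu: "u \<bullet> u = 1"
  proof -
    have "u \<bullet> u = (1 / sqrt (v \<bullet> v)) * (1 / sqrt (v \<bullet> v)) * (v \<bullet> v)"
      unfolding u_def using v(1) by simp
    also have "\<dots> = 1" using vv by (simp add: field_simps)
    finally show ?thesis .
  qed
  have Au: "A *\<^sub>v u = e \<cdot>\<^sub>v u" unfolding u_def using v A
    by (simp add: mult_mat_vec smult_smult_assoc mult.commute)
  obtain W where W: "W \<in> carrier_mat ?n ?n" and WW: "W\<^sup>T * W = 1\<^sub>m ?n" and W0: "col W 0 = u"
    using orth_ext[OF u uu] by blast
  have WT: "W\<^sup>T \<in> carrier_mat ?n ?n" using W by simp
  have WW': "W * W\<^sup>T = 1\<^sub>m ?n" by (rule mat_mult_left_right_inverse[OF WT W WW])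
  define A' where "A' = W\<^sup>T * A * W"
  have A': "A' \<in> carrier_mat ?n ?n" unfolding A'_def using W A by simp
  have A'T: "A'\<^sup>T = A'"
  proof -
    have WA: "W\<^sup>T * A \<in> carrier_mat ?n ?n" using W A by simp
    have "A'\<^sup>T = W\<^sup>T * (W\<^sup>T * A)\<^sup>T" unfolding A'_def using transpose_mult[OF WA W] by simp
    also have "(W\<^sup>T * A)\<^sup>T = A\<^sup>T * W" using transpose_mult[OF WT A] by simp
    finally show ?thesis unfolding A'_def At using W A WT
      by (simp add: assoc_mult_mat[of _ ?n ?n _ ?n _ ?n])
  qed
  have A'sym: "A' $$ (i,j) = A' $$ (j,i)" if "i < ?n" "j < ?n" for i j
    using A'T that A' by (metis carrier_matD index_transpose_mat(1))
  have A'col: "A' $$ (i,0) = (if i = 0 then e else 0)" if i: "i < ?n" for i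
  proof -
    have "A' = W\<^sup>T * (A * W)" unfolding A'_def using W A by (simp add: assoc_mult_mat[of _ ?n ?n _ ?n _ ?n])
    hence "A' $$ (i,0) = row (W\<^sup>T) i \<bullet> col (A * W) 0" using i W A by simp
    moreover have "col (A * W) 0 = A *\<^sub>v col W 0" by (rule col_mult2[OF A W], simp)
    moreover have "A *\<^sub>v col W 0 = e \<cdot>\<^sub>v u" unfolding W0 by (rule Au)
    moreover have "row (W\<^sup>T) i = col W i" using i W by simp
    ultimately have "A' $$ (i,0) = col W i \<bullet> (e \<cdot>\<^sub>v u)" by simp
    also have "\<dots> = e * (col W i \<bullet> col W 0)" using i W u by (simp add: W0)
    also have "col W i \<bullet> col W 0 = (W\<^sup>T * W) $$ (i, 0)" using i W by simp
    also have "\<dots> = (if i = 0 then 1 else 0)" unfolding WW using i by simp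
    finally show ?thesis by simp
  qed
  define A3 where "A3 = mat m m (\<lambda>(i,j). A' $$ (Suc i, Suc j))"
  have A3: "A3 \<in> carrier_mat m m" unfolding A3_def by simp
  have A3T: "A3\<^sup>T = A3" unfolding A3_def by (rule eq_matI, auto simp: A'sym)
  from Suc.IH[OF A3 A3T] obtain P3 es3 where P3: "P3 \<in> carrier_mat m m" and les3: "length es3 = m"
    and PP3: "P3\<^sup>T * P3 = 1\<^sub>m m" and A3P: "A3 = P3 * dmat es3 * P3\<^sup>T" by blast
  have D3: "dmat es3 \<in> carrier_mat m m" using les3 dmat_carrier[of es3] by simp
  have n1: "?n = 1 + m" by simp
  have A'block: "A' = four_block_mat (mat 1 1 (\<lambda>_. e)) (0\<^sub>m 1 m) (0\<^sub>m m 1) A3"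
  proof (rule eq_matI)
    fix i j assume i: "i < dim_row (four_block_mat (mat 1 1 (\<lambda>_. e)) (0\<^sub>m 1 m) (0\<^sub>m m 1) A3)"
      and j: "j < dim_col (four_block_mat (mat 1 1 (\<lambda>_. e)) (0\<^sub>m 1 m) (0\<^sub>m m 1) A3)"
    hence i: "i < ?n" and j: "j < ?n" using A3 by auto
    show "A' $$ (i, j) = four_block_mat (mat 1 1 (\<lambda>_. e)) (0\<^sub>m 1 m) (0\<^sub>m m 1) A3 $$ (i, j)"
    proof (cases "i = 0 \<or> j = 0")
      case True
      have c0: "A' $$ (0,j) = (if j = 0 then e else 0)" if "j < ?n" for j
        using A'sym[OF that, of 0] A'col[OF that] by simp
      from True show ?thesis using i j A3 by (auto simp: A'col c0)
    next
      case False
      then obtain i' j' where "i = Suc i'" "j = Suc j'" by (cases i; cases j; auto)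
      then show ?thesis using i j A3 unfolding A3_def by auto
    qed
  qed (insert A' A3, auto)
  define B where "B = four_block_mat (1\<^sub>m 1) (0\<^sub>m 1 m) (0\<^sub>m m 1) P3"
  have B: "B \<in> carrier_mat ?n ?n" unfolding B_def using four_block_carrier_mat[OF one_carrier_mat[of 1] P3] by simp
  have BT: "B\<^sup>T = four_block_mat (1\<^sub>m 1) (0\<^sub>m 1 m) (0\<^sub>m m 1) P3\<^sup>T"
    unfolding B_def using P3 by (subst transpose_four_block_mat, auto)
  have P3T: "P3\<^sup>T \<in> carrier_mat m m" using P3 by simp
  have "B\<^sup>T * B = four_block_mat (1\<^sub>m 1 * 1\<^sub>m 1 + 0\<^sub>m 1 m * 0\<^sub>m m 1) (1\<^sub>m 1 * 0\<^sub>m 1 m + 0\<^sub>m 1 m * P3)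
      (0\<^sub>m m 1 * 1\<^sub>m 1 + P3\<^sup>T * 0\<^sub>m m 1) (0\<^sub>m m 1 * 0\<^sub>m 1 m + P3\<^sup>T * P3)"
    by (subst BT, subst B_def, rule mult_four_block_mat, insert P3 P3T, auto)
  also have "\<dots> = four_block_mat (1\<^sub>m 1) (0\<^sub>m 1 m) (0\<^sub>m m 1) (1\<^sub>m m)" 
    using P3 P3T unfolding PP3 by simp
  finally have BB: "B\<^sup>T * B = 1\<^sub>m ?n" by simp
  define es where "es = e # es3"
  have D: "dmat es = four_block_mat (mat 1 1 (\<lambda>_. e)) (0\<^sub>m 1 m) (0\<^sub>m m 1) (dmat es3)"
    unfolding es_def dmat_Cons les3 ..
  have Dc: "dmat es \<in> carrier_mat ?n ?n" using dmat_carrier[of es] les3 es_def by simp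
  have BD: "B * dmat es * B\<^sup>T = A'"
  proof -
    let ?E = "mat 1 1 (\<lambda>_. e) :: real mat"
    have E: "?E \<in> carrier_mat 1 1" by simp
    have "B * dmat es = four_block_mat (1\<^sub>m 1 * ?E + 0\<^sub>m 1 m * 0\<^sub>m m 1) (1\<^sub>m 1 * 0\<^sub>m 1 m + 0\<^sub>m 1 m * dmat es3)
      (0\<^sub>m m 1 * ?E + P3 * 0\<^sub>m m 1) (0\<^sub>m m 1 * 0\<^sub>m 1 m + P3 * dmat es3)"
      unfolding B_def D by (rule mult_four_block_mat[OF one_carrier_mat zero_carrier_mat zero_carrier_mat P3 E zero_carrier_mat zero_carrier_mat D3])
    also have "\<dots> = four_block_mat ?E (0\<^sub>m 1 m) (0\<^sub>m m 1) (P3 * dmat es3)"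
      by (simp only: left_mult_one_mat[OF E] left_mult_zero_mat[OF zero_carrier_mat, of 1 m 1]
        right_add_zero_mat[OF E] left_mult_one_mat[OF zero_carrier_mat, of 1 m]
        left_mult_zero_mat[OF D3, of 1] right_add_zero_mat[OF zero_carrier_mat, of 1 m]
        left_mult_zero_mat[OF E, of m] right_mult_zero_mat[OF P3, of 1]
        right_add_zero_mat[OF zero_carrier_mat, of m 1]
        left_mult_zero_mat[OF zero_carrier_mat, of m 1 m]
        left_add_zero_mat[OF mult_carrier_mat[OF P3 D3]])
    finally have BD1: "B * dmat es = four_block_mat ?E (0\<^sub>m 1 m) (0\<^sub>m m 1) (P3 * dmat es3)" .
    hence "B * dmat es * B\<^sup>T = four_block_mat (mat 1 1 (\<lambda>_. e)) (0\<^sub>m 1 m) (0\<^sub>m m 1) (P3 * dmat es3 * P3\<^sup>T)"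
    proof -
      have PD: "P3 * dmat es3 \<in> carrier_mat m m" using P3 D3 by simp
      have "B * dmat es * B\<^sup>T = four_block_mat (?E * 1\<^sub>m 1 + 0\<^sub>m 1 m * 0\<^sub>m m 1) (?E * 0\<^sub>m 1 m + 0\<^sub>m 1 m * P3\<^sup>T)
        (0\<^sub>m m 1 * 1\<^sub>m 1 + (P3 * dmat es3) * 0\<^sub>m m 1) (0\<^sub>m m 1 * 0\<^sub>m 1 m + (P3 * dmat es3) * P3\<^sup>T)"
        unfolding BD1 BT by (rule mult_four_block_mat[OF E zero_carrier_mat zero_carrier_mat PD one_carrier_mat zero_carrier_mat zero_carrier_mat P3T])
      also have "\<dots> = four_block_mat ?E (0\<^sub>m 1 m) (0\<^sub>m m 1) (P3 * dmat es3 * P3\<^sup>T)"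
        by (simp only: right_mult_one_mat[OF E] left_mult_zero_mat[OF zero_carrier_mat, of 1 m 1]
        right_add_zero_mat[OF E] right_mult_zero_mat[OF E, of m]
        left_mult_zero_mat[OF P3T, of 1] right_add_zero_mat[OF zero_carrier_mat, of 1 m]
        right_mult_one_mat[OF zero_carrier_mat, of m 1] right_mult_zero_mat[OF PD, of 1]
        right_add_zero_mat[OF zero_carrier_mat, of m 1]
        left_mult_zero_mat[OF zero_carrier_mat, of m 1 m]
        left_add_zero_mat[OF mult_carrier_mat[OF PD P3T]])
      finally show ?thesis .
    qed
    thus ?thesis unfolding A'block A3P .
  qed
  define P where "P = W * B"
  have P: "P \<in> carrier_mat ?n ?n" unfolding P_def using W B by (rule mult_carrier_mat)
  have PT: "P\<^sup>T = B\<^sup>T * W\<^sup>T" unfolding P_def by (rule transpose_mult[OF W B])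
  have BTc: "B\<^sup>T \<in> carrier_mat ?n ?n" using B by simp
  have "P\<^sup>T * P = B\<^sup>T * W\<^sup>T * (W * B)" unfolding PT by (simp add: P_def)
  also have "\<dots> = B\<^sup>T * (W\<^sup>T * W) * B" 
    using mult_carrier_mat[OF W B] assoc_mult_mat[OF BTc WT, of "W * B" ?n] assoc_mult_mat[OF WT W B] 
      assoc_mult_mat[OF BTc mult_carrier_mat[OF WT W] B] by simp
  also have "\<dots> = 1\<^sub>m ?n" unfolding WW using BB B BTc by simp
  finally have PP: "P\<^sup>T * P = 1\<^sub>m ?n" .
  have "P * dmat es * P\<^sup>T = W * B * dmat es * (B\<^sup>T * W\<^sup>T)" unfolding PT by (simp add: P_def)
  also have "\<dots> = W * (B * dmat es * B\<^sup>T) * W\<^sup>T"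
    using assoc_mult_mat[OF mult_carrier_mat[OF W B] Dc, of _ ?n] assoc_mult_mat[OF W B Dc]
      assoc_mult_mat[OF mult_carrier_mat[OF W mult_carrier_mat[OF B Dc]] BTc WT]
      assoc_mult_mat[OF W mult_carrier_mat[OF B Dc] BTc]
      assoc_mult_mat[OF mult_carrier_mat[OF W B] Dc mult_carrier_mat[OF BTc WT]]
      assoc_mult_mat[OF W mult_carrier_mat[OF mult_carrier_mat[OF B Dc] BTc] WT]
      assoc_mult_mat[OF B Dc BTc]
      assoc_mult_mat[OF W mult_carrier_mat[OF B Dc] mult_carrier_mat[OF BTc WT]]
    by (metis)
  also have "\<dots> = W * (W\<^sup>T * A * W) * W\<^sup>T" unfolding BD A'_def ..
  also have "\<dots> = (W * W\<^sup>T) * A * (W * W\<^sup>T)"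
    using assoc_mult_mat[OF WT A W] assoc_mult_mat[OF W mult_carrier_mat[OF WT A] W]
      assoc_mult_mat[OF W WT A] assoc_mult_mat[OF mult_carrier_mat[OF W WT] A mult_carrier_mat[OF W WT]]
      assoc_mult_mat[OF mult_carrier_mat[OF W mult_carrier_mat[OF WT A]] W WT]
      assoc_mult_mat[OF mult_carrier_mat[OF W WT] A W]
      assoc_mult_mat[OF mult_carrier_mat[OF mult_carrier_mat[OF W WT] A] W WT]
    by metis
  also have "\<dots> = A" unfolding WW' using A by simp
  finally have "A = P * dmat es * P\<^sup>T" by simp
  moreover have "length es = ?n" unfolding es_def using les3 by simp
  ultimately show ?case using P PP by blast
qed



lemma mix_abstract:
  fixes a p :: "nat \<Rightarrow> nat \<Rightarrow> real" and ev :: "nat \<Rightarrow> real" and S T :: "nat set"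
  assumes spec: "\<And>i j. i<n \<Longrightarrow> j<n \<Longrightarrow> a i j = (\<Sum>k<n. ev k * p k i * p k j)"
    and O1: "\<And>i j. i<n \<Longrightarrow> j<n \<Longrightarrow> (\<Sum>k<n. p k i * p k j) = (if i = j then 1 else 0)"
    and k0: "k0 < n" and w: "w * w = real n" and pk0: "\<And>i. i<n \<Longrightarrow> p k0 i * w = 1"
    and evk0: "ev k0 = d"
    and lam: "\<And>k. k<n \<Longrightarrow> k \<noteq> k0 \<Longrightarrow> \<bar>ev k\<bar> \<le> lam" and lam0: "lam \<ge> 0"
    and S: "S \<subseteq> {..<n}" and T: "T \<subseteq> {..<n}"
  shows "\<bar>(\<Sum>i\<in>S. \<Sum>j\<in>T. a i j) - d * real (card S) * real (card T) / real n\<bar> \<le> lam * (real (card S) + real (card T)) / 2"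
proof -
  have finS: "finite S" using S finite_subset by blast
  have finT: "finite T" using T finite_subset by blast
  define u where "u k = (\<Sum>i\<in>S. p k i)" for k
  define v where "v k = (\<Sum>j\<in>T. p k j)" for k
  have main: "(\<Sum>i\<in>S. \<Sum>j\<in>T. a i j) = (\<Sum>k<n. ev k * u k * v k)"
  proof -
    have "(\<Sum>i\<in>S. \<Sum>j\<in>T. a i j) = (\<Sum>i\<in>S. \<Sum>j\<in>T. \<Sum>k<n. ev k * p k i * p k j)"
    proof (intro sum.cong refl)
      fix i j assume "i \<in> S" "j \<in> T"
      hence "i < n" "j < n" using S T by auto
      thus "a i j = (\<Sum>k<n. ev k * p k i * p k j)" by (rule spec)
    qed
    also have "\<dots> = (\<Sum>i\<in>S. \<Sum>k<n. \<Sum>j\<in>T. ev k * p k i * p k j)"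
      by (intro sum.cong refl sum.swap)
    also have "\<dots> = (\<Sum>k<n. \<Sum>i\<in>S. \<Sum>j\<in>T. ev k * p k i * p k j)"
      by (rule sum.swap)
    also have "\<dots> = (\<Sum>k<n. ev k * u k * v k)"
      unfolding u_def v_def mult.assoc sum_product by (simp add: sum_distrib_left mult.assoc)
    finally show ?thesis .
  qed
  have parS: "(\<Sum>k<n. u k * u k) = card S" if "S \<subseteq> {..<n}" "u = (\<lambda>k. \<Sum>i\<in>S. p k i)" for S u
  proof -
    have fin: "finite S" using that finite_subset by blast
    have "(\<Sum>k<n. u k * u k) = (\<Sum>k<n. \<Sum>i\<in>S. \<Sum>i'\<in>S. p k i * p k i')"
      unfolding that(2) sum_product ..
    also have "\<dots> = (\<Sum>i\<in>S. \<Sum>k<n. \<Sum>i'\<in>S. p k i * p k i')"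
      by (rule sum.swap)
    also have "\<dots> = (\<Sum>i\<in>S. \<Sum>i'\<in>S. \<Sum>k<n. p k i * p k i')"
      by (intro sum.cong refl sum.swap)
    also have "\<dots> = (\<Sum>i\<in>S. \<Sum>i'\<in>S. if i = i' then 1 else 0)"
    proof (intro sum.cong refl)
      fix i i' assume "i \<in> S" "i' \<in> S"
      hence "i < n" "i' < n" using that(1) by auto
      thus "(\<Sum>k<n. p k i * p k i') = (if i = i' then 1 else 0)" by (rule O1)
    qed
    also have "\<dots> = card S" using fin by simp
    finally show ?thesis .
  qed
  have uu: "(\<Sum>k<n. u k * u k) = card S" by (rule parS[OF S], simp add: u_def fun_eq_iff)
  have vv: "(\<Sum>k<n. v k * v k) = card T" by (rule parS[OF T], simp add: v_def fun_eq_iff)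
  have w0: "w \<noteq> 0" using pk0[OF k0] by auto
  have uk0: "u k0 * w = card S" unfolding u_def sum_distrib_right using S
    by (subst sum.cong[OF refl, of _ _ "\<lambda>_. 1"], auto simp: pk0)
  have vk0: "v k0 * w = card T" unfolding v_def sum_distrib_right using T
    by (subst sum.cong[OF refl, of _ _ "\<lambda>_. 1"], auto simp: pk0)
  have t0: "ev k0 * u k0 * v k0 = d * card S * card T / n"
  proof -
    have "ev k0 * u k0 * v k0 * (w * w) = d * card S * card T" 
      using uk0 vk0 evk0 by (simp add: algebra_simps)
    moreover have "real n \<noteq> 0" using k0 by simp
    ultimately show ?thesis using w by (simp add: field_simps)
  qed
  have split: "(\<Sum>k<n. ev k * u k * v k) = ev k0 * u k0 * v k0 + (\<Sum>k\<in>{..<n}-{k0}. ev k * u k * v k)"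
    using k0 by (simp add: sum.remove)
  have "\<bar>\<Sum>k\<in>{..<n}-{k0}. ev k * u k * v k\<bar> \<le> (\<Sum>k\<in>{..<n}-{k0}. \<bar>ev k * u k * v k\<bar>)"
    by (rule sum_abs)
  also have "\<dots> \<le> (\<Sum>k\<in>{..<n}-{k0}. lam * ((u k * u k + v k * v k) / 2))"
  proof (rule sum_mono)
    fix k assume k: "k \<in> {..<n}-{k0}"
    have "\<bar>ev k * u k * v k\<bar> = \<bar>ev k\<bar> * \<bar>u k * v k\<bar>" by (simp add: abs_mult)
    also have "\<dots> \<le> lam * \<bar>u k * v k\<bar>" using lam[of k] k by (intro mult_right_mono, auto)
    also have "\<bar>u k * v k\<bar> \<le> (u k * u k + v k * v k) / 2"
      using sum_squares_ge_zero[of "u k - v k" 0] sum_squares_ge_zero[of "u k + v k" 0]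
      by (auto simp: abs_if algebra_simps)
    hence "lam * \<bar>u k * v k\<bar> \<le> lam * ((u k * u k + v k * v k) / 2)" using lam0 by (intro mult_left_mono)
    finally show "\<bar>ev k * u k * v k\<bar> \<le> lam * ((u k * u k + v k * v k) / 2)" .
  qed
  also have "\<dots> \<le> (\<Sum>k<n. lam * ((u k * u k + v k * v k) / 2))"
    by (rule sum_mono2, auto intro!: mult_nonneg_nonneg lam0)
  also have "\<dots> = lam * (card S + card T) / 2"
    by (simp add: sum_distrib_left[symmetric] sum_divide_distrib[symmetric] sum.distrib uu vv)
  finally show ?thesis unfolding main split t0 by simp
qed

lemma list_part:
  fixes es :: "real list"
  assumes len: "length es = n" and n2: "n \<ge> 2" and k0: "k0 < n" and ek0: "es ! k0 = d"
    and le: "\<And>k. k < n \<Longrightarrow> es ! k \<le> d"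
    and L: "L = rev (sort es)" and lt: "max \<bar>L!1\<bar> \<bar>L!(n-1)\<bar> < d"
    and k: "k < n" "k \<noteq> k0"
  shows "\<bar>es ! k\<bar> \<le> max \<bar>L!1\<bar> \<bar>L!(n-1)\<bar>"
proof -
  have lenL: "length L = n" using L len by simp
  have mono: "L ! j \<le> L ! i" if "i \<le> j" "j < n" for i j
  proof -
    have "L ! j = sort es ! (n - Suc j)" "L ! i = sort es ! (n - Suc i)"
      using that L len by (auto simp: rev_nth)
    moreover have "sort es ! (n - Suc j) \<le> sort es ! (n - Suc i)"
      by (rule sorted_nth_mono, insert that len, auto)
    ultimately show ?thesis by simp
  qed
  have msetL: "mset L = mset es" using L by simp
  have setL: "set L = set es" using L by simp
  have L0: "L ! 0 = d"
  proof -
    have "L ! 0 \<in> set es" using setL lenL n2 by (metis le0 nth_mem order_less_le_trans pos2)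
    then obtain i where "i < n" "es ! i = L ! 0" using len by (metis in_set_conv_nth)
    hence "L ! 0 \<le> d" using le by metis
    moreover have "d \<in> set L" using setL ek0 k0 len by (metis nth_mem)
    then obtain j where "j < n" "L ! j = d" using lenL by (metis in_set_conv_nth)
    hence "d \<le> L ! 0" using mono[of 0 j] by simp
    ultimately show ?thesis by simp
  qed
  have ne: "es ! k \<noteq> d"
  proof
    assume ekd: "es ! k = d"
    have "{k, k0} \<subseteq> {i. i < length es \<and> d = es ! i}" using k k0 ekd ek0 len by auto
    hence "card {k, k0} \<le> card {i. i < length es \<and> d = es ! i}" by (intro card_mono, auto)
    hence "2 \<le> length (filter ((=) d) es)" using k by (simp add: length_filter_conv_card)
    also have "length (filter ((=) d) es) = length (filter ((=) d) L)"
      using msetL by (metis mset_filter size_mset)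
    finally have c2: "2 \<le> card {i. i < n \<and> d = L ! i}" using lenL by (simp add: length_filter_conv_card)
    have "\<exists>i. i < n \<and> d = L ! i \<and> i \<noteq> 0"
    proof (rule ccontr)
      assume "\<not> ?thesis"
      hence "{i. i < n \<and> d = L ! i} \<subseteq> {0}" by auto
      hence "card {i. i < n \<and> d = L ! i} \<le> 1" using card_mono[of "{0::nat}"] by fastforce
      thus False using c2 by simp
    qed
    then obtain i where i: "i < n" "d = L ! i" "i \<noteq> 0" by blast
    hence "d \<le> L ! 1" using mono[of 1 i] by simp
    moreover have "L ! 1 \<le> d" using mono[of 0 1] n2 L0 by simp
    ultimately have "L ! 1 = d" by simp
    thus False using lt by (simp, linarith)
  qed
  have "es ! k \<in> set L" using setL k len by (metis nth_mem)
  then obtain j where j: "j < n" "L ! j = es ! k" using lenL by (metis in_set_conv_nth)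
  have "j \<noteq> 0" using j ne L0 by (metis)
  hence "L ! j \<le> L ! 1" "L ! (n-1) \<le> L ! j" using mono[of 1 j] mono[of j "n-1"] j n2 by auto
  thus ?thesis using j by linarith
qed

lemma sum_list_single_mset: "sum_list (map (\<lambda>a. {#a#}) es) = mset es"
  by (induction es, auto)

lemma proots_spectral:
  fixes A P :: "real mat"
  assumes A: "A \<in> carrier_mat n n" and P: "P \<in> carrier_mat n n" and len: "length es = n"
    and PP: "P\<^sup>T * P = 1\<^sub>m n" and AP: "A = P * dmat es * P\<^sup>T"
  shows "proots (char_poly A) = mset es"
proof -
  have D: "dmat es \<in> carrier_mat n n" using dmat_carrier[of es] len by simp
  have PT: "P\<^sup>T \<in> carrier_mat n n" using P by simp
  have PP': "P * P\<^sup>T = 1\<^sub>m n" by (rule mat_mult_left_right_inverse[OF PT P PP])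
  have "similar_mat A (dmat es)" unfolding similar_mat_def
    by (rule exI[of _ P], rule exI[of _ "P\<^sup>T"], rule similar_mat_witI[OF PP' PP AP A D P PT])
  hence "char_poly A = char_poly (dmat es)" by (rule char_poly_similar)
  also have "\<dots> = (\<Prod>a\<leftarrow>diag_mat (dmat es). [:- a, 1:])"
    by (rule char_poly_upper_triangular[OF D], auto simp: upper_triangular_def dmat_def)
  also have "diag_mat (dmat es) = es" unfolding diag_mat_def dmat_def
    by (rule nth_equalityI, auto)
  finally have cp: "char_poly A = prod_list (map (\<lambda>a. [:- a, 1:]) es)" by simp
  have "proots (char_poly A) = sum_list (map proots (map (\<lambda>a. [:- a, 1:]) es))"
    unfolding cp using proots_prod_list[of "map (\<lambda>a. [:- a, 1:]) es"] by force
  also have "\<dots> = sum_list (map (\<lambda>a. {#a#}) es)" by (simp add: o_def proots_linear_factor)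
  finally show ?thesis by (simp add: sum_list_single_mset)
qed

lemma parseval:
  fixes p :: "nat \<Rightarrow> nat \<Rightarrow> real"
  assumes O1: "\<And>i j. i<n \<Longrightarrow> j<n \<Longrightarrow> (\<Sum>k<n. p k i * p k j) = (if i = j then 1 else 0)"
    and S: "S \<subseteq> {..<n}"
  shows "(\<Sum>k<n. (\<Sum>i\<in>S. p k i) * (\<Sum>i\<in>S. p k i)) = card S"
proof -
  have fin: "finite S" using S finite_subset by blast
  have "(\<Sum>k<n. (\<Sum>i\<in>S. p k i) * (\<Sum>i\<in>S. p k i)) = (\<Sum>k<n. \<Sum>i\<in>S. \<Sum>i'\<in>S. p k i * p k i')"
    unfolding sum_product ..
  also have "\<dots> = (\<Sum>i\<in>S. \<Sum>k<n. \<Sum>i'\<in>S. p k i * p k i')"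
    by (rule sum.swap)
  also have "\<dots> = (\<Sum>i\<in>S. \<Sum>i'\<in>S. \<Sum>k<n. p k i * p k i')"
    by (intro sum.cong refl sum.swap)
  also have "\<dots> = (\<Sum>i\<in>S. \<Sum>i'\<in>S. if i = i' then 1 else 0)"
  proof (intro sum.cong refl)
    fix i i' assume "i \<in> S" "i' \<in> S"
    hence "i < n" "i' < n" using S by auto
    thus "(\<Sum>k<n. p k i * p k i') = (if i = i' then 1 else 0)" by (rule O1)
  qed
  also have "\<dots> = card S" using fin by simp
  finally show ?thesis .
qed

lemma index_PDPT:
  fixes P :: "real mat"
  assumes P: "P \<in> carrier_mat n n" and len: "length es = n" and i: "i < n" and j: "j < n"
  shows "(P * dmat es * P\<^sup>T) $$ (i,j) = (\<Sum>k<n. es ! k * P $$ (i,k) * P $$ (j,k))"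
proof -
  have D: "dmat es \<in> carrier_mat n n" using dmat_carrier[of es] len by simp
  have PD: "(P * dmat es) $$ (i,l) = P $$ (i,l) * es ! l" if l: "l < n" for l
  proof -
    have "(P * dmat es) $$ (i,l) = (\<Sum>m\<in>{0..<n}. P $$ (i,m) * (if m = l then es ! l else 0))"
      using P D i l len by (simp add: scalar_prod_def dmat_def, intro sum.cong refl, auto)
    also have "\<dots> = P $$ (i,l) * es ! l" using l by (simp add: if_distrib sum.delta' cong: if_cong)
    finally show ?thesis .
  qed
  have PDc: "P * dmat es \<in> carrier_mat n n" using P D by simp
  have "(P * dmat es * P\<^sup>T) $$ (i,j) = row (P * dmat es) i \<bullet> col P\<^sup>T j"
    using PDc P i j by (intro index_mult_mat, auto)
  also have "\<dots> = (\<Sum>k\<in>{0..<n}. (P * dmat es) $$ (i,k) * P $$ (j,k))"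
    unfolding scalar_prod_def using PDc P i j by (intro sum.cong, auto)
  also have "\<dots> = (\<Sum>k<n. es ! k * P $$ (i,k) * P $$ (j,k))"
    by (simp add: lessThan_atLeast0 PD mult.commute mult.left_commute)
  finally show ?thesis .
qed

lemma index_mult_mult:
  fixes P :: "real mat"
  assumes P: "P \<in> carrier_mat n n" and A: "A \<in> carrier_mat n n" and l: "l < n" and j: "j < n"
  shows "(P\<^sup>T * A) $$ (l,j) = (\<Sum>i<n. P $$ (i,l) * A $$ (i,j))"
  using P A l j by (simp add: scalar_prod_def lessThan_atLeast0)

lemma index_PPT:
  fixes P :: "real mat"
  assumes P: "P \<in> carrier_mat n n" and i: "i < n" and j: "j < n"
  shows "(P * P\<^sup>T) $$ (i,j) = (\<Sum>k<n. P $$ (i,k) * P $$ (j,k))"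
  using P i j by (simp add: scalar_prod_def lessThan_atLeast0)

lemma quad_bound:
  fixes a :: "nat \<Rightarrow> nat \<Rightarrow> real" and z :: "nat \<Rightarrow> real"
  assumes nn: "\<And>i j. a i j \<ge> 0" and rs: "\<And>i. i < n \<Longrightarrow> (\<Sum>j<n. a i j) = d"
    and cs: "\<And>j. j < n \<Longrightarrow> (\<Sum>i<n. a i j) = d"
  shows "(\<Sum>i<n. \<Sum>j<n. z i * a i j * z j) \<le> d * (\<Sum>i<n. z i * z i)"
proof -
  have "(\<Sum>i<n. \<Sum>j<n. z i * a i j * z j) \<le> (\<Sum>i<n. \<Sum>j<n. a i j * ((z i * z i + z j * z j) / 2))"
  proof (intro sum_mono)
    fix i j
    have "z i * z j \<le> (z i * z i + z j * z j) / 2" using sum_squares_ge_zero[of "z i - z j" 0]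
      by (simp add: algebra_simps power2_eq_square)
    hence "a i j * (z i * z j) \<le> a i j * ((z i * z i + z j * z j) / 2)"
      using mult_left_mono[OF _ nn[of i j]] by blast
    thus "z i * a i j * z j \<le> a i j * ((z i * z i + z j * z j) / 2)"
      by (simp add: algebra_simps)
  qed
  also have "\<dots> = ((\<Sum>i<n. \<Sum>j<n. a i j * (z i * z i)) + (\<Sum>i<n. \<Sum>j<n. a i j * (z j * z j))) / 2"
    by (simp add: sum.distrib sum_divide_distrib[symmetric] algebra_simps add_divide_distrib)
  finally have 1: "(\<Sum>i<n. \<Sum>j<n. z i * a i j * z j) \<le> ((\<Sum>i<n. \<Sum>j<n. a i j * (z i * z i)) + (\<Sum>i<n. \<Sum>j<n. a i j * (z j * z j))) / 2" .
  have 2: "(\<Sum>i<n. \<Sum>j<n. a i j * (z j * z j)) = (\<Sum>j<n. \<Sum>i<n. a i j * (z j * z j))"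
    by (rule sum.swap)
  have 3: "(\<Sum>i<n. \<Sum>j<n. a i j * (z i * z i)) = (\<Sum>i<n. z i * z i * d)"
    by (intro sum.cong refl, simp add: sum_distrib_right[symmetric] rs mult.commute)
  have 4: "(\<Sum>j<n. \<Sum>i<n. a i j * (z j * z j)) = (\<Sum>j<n. z j * z j * d)"
    by (intro sum.cong refl, simp add: sum_distrib_right[symmetric] cs mult.commute)
  have 5: "(\<Sum>i<n. z i * z i * d) = d * (\<Sum>i<n. z i * z i)" by (simp add: sum_distrib_left mult.commute)
  show ?thesis using 1 unfolding 2 3 4 5 by simp
qed

lemma sum_indicator_card:
  fixes n i :: nat and E :: "nat \<Rightarrow> nat \<Rightarrow> bool"
  shows "(\<Sum>j<n. (if E i j then 1 else 0 :: real)) = real (card {u. u < n \<and> E i u})"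
proof -
  have "(\<Sum>j\<in>{..<n} \<inter> {j. E i j}. (1::real)) = (\<Sum>j<n. if j \<in> {j. E i j} then 1 else 0)"
    using sum.inter_restrict[OF finite_lessThan, of "\<lambda>_. (1::real)" n "{j. E i j}"] by simp
  hence "(\<Sum>j<n. (if E i j then 1 else 0 :: real)) = (\<Sum>j\<in>{..<n} \<inter> {j. E i j}. 1)"
    by simp
  also have "{..<n} \<inter> {j. E i j} = {u. u < n \<and> E i u}" by auto
  finally show ?thesis by simp
qed

lemma graph_mixing:
  fixes E :: "nat \<Rightarrow> nat \<Rightarrow> bool"
  assumes ndl: "ndl_graph n d lam E" and dpos: "d > 0" and lamd: "lam < real d"
    and S: "S \<subseteq> {..<n}" and T: "T \<subseteq> {..<n}"
  shows "\<bar>(\<Sum>i\<in>S. \<Sum>j\<in>T. (if E i j then 1 else 0 :: real)) - real d * real (card S) * real (card T) / real n\<bar>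
    \<le> lam * (real (card S) + real (card T)) / 2"
proof (cases "n = 0")
  case True
  with S T have "S = {}" "T = {}" by auto
  thus ?thesis by simp
next
  case False
  from ndl have sg: "simple_graph n E" and reg: "regular n E d" and gl: "graph_lambda n E \<le> lam"
    unfolding ndl_graph_def by auto
  define a where "a i j = (if E i j then 1 else 0::real)" for i j
  define A where "A = adj_matrix n E"
  have Ac: "A \<in> carrier_mat n n" unfolding A_def adj_matrix_def by simp
  have Aij: "A $$ (i,j) = a i j" if "i<n" "j<n" for i j
    using that unfolding A_def adj_matrix_def a_def by simp
  have sym: "a i j = a j i" for i j using sg unfolding simple_graph_def a_def by metis
  have nn: "a i j \<ge> 0" for i j unfolding a_def by simp
  have AT: "A\<^sup>T = A" by (rule eq_matI, insert Ac, auto simp: Aij sym)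
  obtain P es where P: "P \<in> carrier_mat n n" and les: "length es = n" and PP: "P\<^sup>T * P = 1\<^sub>m n"
    and AP: "A = P * dmat es * P\<^sup>T" using spectral[OF Ac AT] by blast
  have PT: "P\<^sup>T \<in> carrier_mat n n" using P by simp
  have PP': "P * P\<^sup>T = 1\<^sub>m n" by (rule mat_mult_left_right_inverse[OF PT P PP])
  have D: "dmat es \<in> carrier_mat n n" using dmat_carrier[of es] les by simp
  define p where "p k i = P $$ (i,k)" for k i
  define ev where "ev k = es ! k" for k
  have spec: "a i j = (\<Sum>k<n. ev k * p k i * p k j)" if "i<n" "j<n" for i j
    using Aij[OF that] index_PDPT[OF P les that] AP unfolding p_def ev_def by simp
  have O1: "(\<Sum>k<n. p k i * p k j) = (if i = j then 1 else 0)" if "i<n" "j<n" for i j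
    using index_PPT[OF P that] PP' that unfolding p_def by simp
  have O2: "(\<Sum>i<n. p k i * p l i) = (if k = l then 1 else 0)" if "k<n" "l<n" for k l
    using index_mult_mult[OF P P that] PP that unfolding p_def by simp
  have rs: "(\<Sum>j<n. a i j) = d" if "i < n" for i
    using reg that unfolding regular_def a_def by (simp add: sum_indicator_card)
  have cs: "(\<Sum>i<n. a i j) = d" if "j < n" for j
    using rs[OF that] by (simp add: sym)
  have n2: "n \<ge> 2"
  proof (rule ccontr)
    assume "\<not> n \<ge> 2"
    with False have n1: "n = 1" by simp
    have "{u. u < n \<and> E 0 u} = {}" using sg n1 unfolding simple_graph_def by auto
    hence "d = 0" using reg n1 unfolding regular_def by force
    thus False using dpos by simp
  qed
  have PTA: "P\<^sup>T * A = dmat es * P\<^sup>T"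
  proof -
    have "P\<^sup>T * A = (P\<^sup>T * P) * dmat es * P\<^sup>T" unfolding AP using P PT D
      by (simp add: assoc_mult_mat[of _ n n _ n _ n])
    thus ?thesis unfolding PP using D PT by simp
  qed
  have E1: "(\<Sum>i<n. p l i * a i j) = ev l * p l j" if l: "l<n" and j: "j<n" for l j
  proof -
    have "(\<Sum>i<n. p l i * a i j) = (P\<^sup>T * A) $$ (l,j)"
      unfolding index_mult_mult[OF P Ac l j] p_def by (intro sum.cong refl, simp add: Aij j)
    also have "\<dots> = (dmat es * P\<^sup>T) $$ (l,j)" unfolding PTA ..
    also have "\<dots> = row (dmat es) l \<bullet> col P\<^sup>T j" using D PT l j by (intro index_mult_mat, auto)
    also have "\<dots> = (\<Sum>m\<in>{0..<n}. (if l = m then es ! l else 0) * P $$ (j,m))"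
      unfolding scalar_prod_def using D PT l j les by (intro sum.cong, auto simp: dmat_def)
    also have "\<dots> = (\<Sum>m\<in>{0..<n}. if m = l then es ! l * P $$ (j,l) else 0)"
      by (intro sum.cong refl, auto)
    also have "\<dots> = ev l * p l j" using l unfolding ev_def p_def by simp
    finally show ?thesis .
  qed
  have ev_le: "ev l \<le> d" if l: "l < n" for l
  proof -
    have "ev l = ev l * (\<Sum>j<n. p l j * p l j)" using O2[OF l l] by simp
    also have "\<dots> = (\<Sum>j<n. (\<Sum>i<n. p l i * a i j) * p l j)"
      by (simp add: sum_distrib_left E1 l mult.assoc)
    also have "\<dots> = (\<Sum>j<n. \<Sum>i<n. p l i * a i j * p l j)" by (simp add: sum_distrib_right)
    also have "\<dots> = (\<Sum>i<n. \<Sum>j<n. p l i * a i j * p l j)" by (rule sum.swap)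
    also have "\<dots> \<le> d * (\<Sum>i<n. p l i * p l i)" by (rule quad_bound[OF nn rs cs])
    also have "\<dots> = d" using O2[OF l l] by simp
    finally show ?thesis .
  qed
  define w where "w l = (\<Sum>i<n. p l i)" for l
  have ev_w: "ev l * w l = d * w l" if l: "l < n" for l
  proof -
    have "ev l * w l = (\<Sum>j<n. \<Sum>i<n. p l i * a i j)"
      unfolding w_def sum_distrib_left by (intro sum.cong refl, simp add: E1 l)
    also have "\<dots> = (\<Sum>i<n. \<Sum>j<n. p l i * a i j)" by (rule sum.swap)
    also have "\<dots> = (\<Sum>i<n. p l i * d)" by (intro sum.cong refl, simp add: sum_distrib_left[symmetric] rs)
    also have "\<dots> = d * w l" unfolding w_def by (simp add: sum_distrib_left mult.commute)
    finally show ?thesis .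
  qed
  have ww: "(\<Sum>l<n. w l * w l) = n" unfolding w_def using parseval[OF O1, of "{..<n}"] by simp
  obtain k0 where k0: "k0 < n" "w k0 \<noteq> 0"
  proof (rule ccontr)
    assume "\<not> thesis"
    with that have "\<forall>l<n. w l = 0" by blast
    hence "(\<Sum>l<n. w l * w l) = 0" by simp
    thus False using ww False by simp
  qed
  have evk0: "ev k0 = d" using ev_w[OF k0(1)] k0(2) by simp
  define L where "L = eigs n E"
  have L: "L = rev (sort es)" unfolding L_def eigs_def A_def[symmetric]
    proots_spectral[OF Ac P les PP AP] by (simp add: sorted_list_of_multiset_mset)
  define g where "g = graph_lambda n E"
  have g: "g = max \<bar>L!1\<bar> \<bar>L!(n-1)\<bar>" unfolding g_def graph_lambda_def L_def ..
  have glt: "g < d" using gl lamd unfolding g_def by simp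
  have bnd: "\<bar>ev k\<bar> \<le> g" if "k < n" "k \<noteq> k0" for k
    unfolding g ev_def by (rule list_part[OF les n2 k0(1) _ _ L _ that], insert evk0 ev_le glt g,
      auto simp: ev_def)
  have wk: "w k = 0" if "k < n" "k \<noteq> k0" for k
  proof -
    have "ev k \<noteq> d" using bnd[OF that] glt by auto
    thus ?thesis using ev_w[OF that(1)] by simp
  qed
  have wk0: "w k0 * w k0 = n"
  proof -
    have "(\<Sum>l<n. w l * w l) = w k0 * w k0 + (\<Sum>l\<in>{..<n}-{k0}. w l * w l)"
      using k0 by (simp add: sum.remove)
    also have "(\<Sum>l\<in>{..<n}-{k0}. w l * w l) = 0" by (intro sum.neutral, auto simp: wk)
    finally show ?thesis using ww by simp
  qed
  have pk0: "p k0 i * w k0 = 1" if i: "i < n" for i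
  proof -
    have "(\<Sum>k<n. p k i * w k) = (\<Sum>k<n. \<Sum>j<n. p k i * p k j)"
      unfolding w_def by (simp add: sum_distrib_left)
    also have "\<dots> = (\<Sum>j<n. \<Sum>k<n. p k i * p k j)" by (rule sum.swap)
    also have "\<dots> = (\<Sum>j<n. if i = j then 1 else 0)" by (intro sum.cong refl, simp add: O1 i)
    also have "\<dots> = 1" using i by simp
    finally have 1: "(\<Sum>k<n. p k i * w k) = 1" .
    have "(\<Sum>k<n. p k i * w k) = p k0 i * w k0 + (\<Sum>k\<in>{..<n}-{k0}. p k i * w k)"
      using k0 by (simp add: sum.remove)
    also have "(\<Sum>k\<in>{..<n}-{k0}. p k i * w k) = 0" by (intro sum.neutral, auto simp: wk)
    finally show ?thesis using 1 by simp
  qed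
  have g0: "g \<ge> 0" unfolding g by simp
  have "\<bar>(\<Sum>i\<in>S. \<Sum>j\<in>T. a i j) - real d * real (card S) * real (card T) / real n\<bar> \<le> g * (real (card S) + real (card T)) / 2"
    by (rule mix_abstract[OF spec O1 k0(1) wk0 pk0 evk0 bnd g0 S T])
  also have "\<dots> \<le> lam * (real (card S) + real (card T)) / 2"
    using gl unfolding g_def by (intro divide_right_mono mult_right_mono, auto)
  finally show ?thesis unfolding a_def .
qed



definition nb :: "(nat \<times> nat) set \<Rightarrow> nat \<Rightarrow> nat set" where "nb S x = {u. (x,u) \<in> S}"
definition ib :: "(nat \<times> nat) set \<Rightarrow> nat \<Rightarrow> nat set" where "ib S y = {u. (u,y) \<in> S}"

definition altp :: "(nat \<times> nat) set \<Rightarrow> (nat \<times> nat) set \<Rightarrow> nat list \<Rightarrow> bool" where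
  "altp S H vs \<longleftrightarrow> vs \<noteq> [] \<and> distinct vs \<and>
     (\<forall>i. Suc i < length vs \<longrightarrow> (if even i then (vs!i, vs!Suc i) \<in> H - S else (vs!Suc i, vs!i) \<in> S))"

locale ffsetup =
  fixes X Y :: "nat set" and H S :: "(nat \<times> nat) set" and x0 :: nat
  assumes finX: "finite X" and finY: "finite Y" and disj: "X \<inter> Y = {}"
    and HXY: "H \<subseteq> X \<times> Y" and SH: "S \<subseteq> H" and x0: "x0 \<in> X"
begin

lemma parity:
  assumes a: "altp S H vs" and h: "vs ! 0 = x0" and i: "i < length vs"
  shows "(even i \<longrightarrow> vs ! i \<in> X) \<and> (odd i \<longrightarrow> vs ! i \<in> Y)"
proof (cases i)
  case 0 thus ?thesis using h x0 by simp
next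
  case (Suc j)
  have e: "if even j then (vs!j, vs!Suc j) \<in> H - S else (vs!Suc j, vs!j) \<in> S"
    using a i Suc unfolding altp_def by auto
  show ?thesis
  proof (cases "even j")
    case True
    with e have "(vs!j, vs!Suc j) \<in> H" by simp
    hence "vs ! Suc j \<in> Y" using HXY by auto
    thus ?thesis using Suc True by simp
  next
    case False
    with e have "(vs!Suc j, vs!j) \<in> S" by simp
    hence "vs ! Suc j \<in> X" using HXY SH by auto
    thus ?thesis using Suc False by simp
  qed
qed

lemma parityX:
  assumes a: "altp S H vs" and h: "vs ! 0 = x0" and i: "i < length vs" and x: "vs ! i \<in> X"
  shows "even i"
  using parity[OF a h i] x disj by auto

lemma parityY:
  assumes a: "altp S H vs" and h: "vs ! 0 = x0" and i: "i < length vs" and y: "vs ! i \<in> Y"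
  shows "odd i"
  using parity[OF a h i] y disj by auto

lemma altp_take:
  assumes a: "altp S H vs" and k: "0 < k" "k \<le> length vs"
  shows "altp S H (take k vs)"
  unfolding altp_def
proof (intro conjI allI impI)
  show "take k vs \<noteq> []" using a k unfolding altp_def by auto
  show "distinct (take k vs)" using a unfolding altp_def by auto
  fix i assume i: "Suc i < length (take k vs)"
  hence "Suc i < length vs" "Suc i < k" by auto
  with a have "if even i then (vs!i, vs!Suc i) \<in> H - S else (vs!Suc i, vs!i) \<in> S"
    unfolding altp_def by blast
  thus "if even i then (take k vs ! i, take k vs ! Suc i) \<in> H - S else (take k vs ! Suc i, take k vs ! i) \<in> S"
    using \<open>Suc i < k\<close> by (cases "even i") auto
qed

lemma altp_snoc:
  assumes a: "altp S H vs" and z: "z \<notin> set vs"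
    and e: "if even (length vs - 1) then (last vs, z) \<in> H - S else (z, last vs) \<in> S"
  shows "altp S H (vs @ [z])"
  unfolding altp_def
proof (intro conjI allI impI)
  show "vs @ [z] \<noteq> []" by simp
  show "distinct (vs @ [z])" using a z unfolding altp_def by simp
  fix i assume i: "Suc i < length (vs @ [z])"
  show "if even i then ((vs @ [z]) ! i, (vs @ [z]) ! Suc i) \<in> H - S
        else ((vs @ [z]) ! Suc i, (vs @ [z]) ! i) \<in> S"
  proof (cases "Suc i < length vs")
    case True
    then show ?thesis using a unfolding altp_def by (auto simp: nth_append)
  next
    case False
    with i have ii: "i = length vs - 1" "length vs > 0" by auto
    have "vs ! i = last vs" using ii by (simp add: last_conv_nth)
    moreover have "(vs @ [z]) ! Suc i = z" using ii by (simp add: nth_append)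
    moreover have "(vs @ [z]) ! i = vs ! i" using ii by (simp add: nth_append)
    ultimately show ?thesis using e ii by (cases "odd (length vs)") auto
  qed
qed

lemma finS: "finite S"
proof -
  have "finite (X \<times> Y)" using finX finY by simp
  thus ?thesis using finite_subset[OF subset_trans[OF SH HXY]] by simp
qed

lemma card_swap_one:
  assumes fin: "finite N" and R: "R \<subseteq> N" and a: "a \<notin> N"
  shows "card ((N - R) \<union> {a}) = card N - card R + 1"
proof -
  have "card ((N - R) \<union> {a}) = card (N - R) + 1" using fin a by (simp add: card_insert_if)
  also have "card (N - R) = card N - card R" using R fin by (meson card_Diff_subset finite_subset)
  finally show ?thesis .
qed

lemma augment:
  assumes a: "altp S H vs" and h: "vs ! 0 = x0" and y: "last vs \<in> Y"
  defines "Add \<equiv> {(vs!i, vs!Suc i) | i. Suc i < length vs \<and> even i}"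
      and "Rem \<equiv> {(vs!Suc i, vs!i) | i. Suc i < length vs \<and> odd i}"
  shows "(S - Rem) \<union> Add \<subseteq> H"
    and "\<And>x. x \<in> X \<Longrightarrow> card (nb ((S - Rem) \<union> Add) x) = card (nb S x) + (if x = x0 then 1 else 0)"
    and "\<And>z. z \<in> Y \<Longrightarrow> card (ib ((S - Rem) \<union> Add) z) = card (ib S z) + (if z = last vs then 1 else 0)"
proof -
  define m where "m = length vs"
  have m0: "m > 0" using a unfolding altp_def m_def by auto
  have lastv: "last vs = vs ! (m - 1)" using m0 unfolding m_def by (simp add: last_conv_nth)
  have ym: "vs ! (m - 1) \<in> Y" using y lastv by simp
  have "odd (m - 1)" by (rule parityY[OF a h _ ym], insert m0, simp add: m_def)
  hence meven: "even m" using m0 by (cases m) auto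
  have m2: "m \<ge> 2" using meven m0 by (cases m) (auto intro: Suc_leI odd_pos)
  have dist: "distinct vs" using a unfolding altp_def by simp
  have inj: "i = j" if "i < m" "j < m" "vs ! i = vs ! j" for i j
    using nth_eq_iff_index_eq[OF dist] that unfolding m_def by auto
  have eH: "(vs!i, vs!Suc i) \<in> H \<and> (vs!i, vs!Suc i) \<notin> S" if "Suc i < m" "even i" for i
    using a that unfolding altp_def m_def by auto
  have eS: "(vs!Suc i, vs!i) \<in> S" if "Suc i < m" "odd i" for i
    using a that unfolding altp_def m_def by auto
  have Add_def': "Add = {(vs!i, vs!Suc i) | i. Suc i < m \<and> even i}" unfolding Add_def m_def ..
  have Rem_def': "Rem = {(vs!Suc i, vs!i) | i. Suc i < m \<and> odd i}" unfolding Rem_def m_def ..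
  show "(S - Rem) \<union> Add \<subseteq> H" unfolding Add_def' using SH eH by auto
  have finS: "finite S" by (rule finS)
  have finnb: "finite (nb S x)" for x
  proof -
    have "nb S x = snd ` (S \<inter> ({x} \<times> UNIV))" unfolding nb_def by force
    thus ?thesis using finS by simp
  qed
  have finib: "finite (ib S z)" for z
  proof -
    have "ib S z = fst ` (S \<inter> (UNIV \<times> {z}))" unfolding ib_def by force
    thus ?thesis using finS by simp
  qed
  show "card (nb ((S - Rem) \<union> Add) x) = card (nb S x) + (if x = x0 then 1 else 0)" if x: "x \<in> X" for x
  proof -
    have nbeq: "nb ((S - Rem) \<union> Add) x = (nb S x - {u. (x,u) \<in> Rem}) \<union> {u. (x,u) \<in> Add}"
      unfolding nb_def by auto
    show ?thesis
    proof (cases "x \<in> set vs")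
      case False
      have "{u. (x,u) \<in> Rem} = {}" "{u. (x,u) \<in> Add} = {}"
        using False unfolding Rem_def' Add_def' m_def by (auto simp: in_set_conv_nth) (metis Suc_lessD nth_mem)+
      moreover have "x \<noteq> x0" using False h m0 unfolding m_def by (metis nth_mem)
      ultimately show ?thesis using nbeq by simp
    next
      case True
      then obtain j where j: "j < m" "vs ! j = x" unfolding m_def by (auto simp: in_set_conv_nth)
      have ej: "even j" using parityX[OF a h, of j] j x unfolding m_def by simp
      have sj: "Suc j < m"
      proof (rule ccontr)
        assume "\<not> Suc j < m"
        hence "j = m - 1" using j by simp
        thus False using ej meven m0 by (metis \<open>odd (m - 1)\<close>)
      qed
      have AddN: "{u. (x,u) \<in> Add} = {vs ! Suc j}"
      proof
        show "{u. (x,u) \<in> Add} \<subseteq> {vs ! Suc j}"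
        proof
          fix u assume "u \<in> {u. (x,u) \<in> Add}"
          then obtain i where i: "Suc i < m" "even i" "x = vs!i" "u = vs!Suc i" unfolding Add_def' by auto
          hence "i = j" using inj[of i j] j by simp
          thus "u \<in> {vs ! Suc j}" using i by simp
        qed
        show "{vs ! Suc j} \<subseteq> {u. (x,u) \<in> Add}" unfolding Add_def' using sj ej j by auto
      qed
      have RemN: "{u. (x,u) \<in> Rem} = (if j = 0 then {} else {vs ! (j - 1)})"
      proof
        show "{u. (x,u) \<in> Rem} \<subseteq> (if j = 0 then {} else {vs ! (j - 1)})"
        proof
          fix u assume "u \<in> {u. (x,u) \<in> Rem}"
          then obtain i where i: "Suc i < m" "odd i" "x = vs!Suc i" "u = vs!i" unfolding Rem_def' by auto
          hence "Suc i = j" using inj[of "Suc i" j] j by simp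
          thus "u \<in> (if j = 0 then {} else {vs ! (j - 1)})" using i by auto
        qed
        show "(if j = 0 then {} else {vs ! (j - 1)}) \<subseteq> {u. (x,u) \<in> Rem}"
        proof (cases "j = 0")
          case False
          then obtain i where "j = Suc i" by (cases j, auto)
          thus ?thesis unfolding Rem_def' using j ej by auto
        qed simp
      qed
      have notin: "vs ! Suc j \<notin> nb S x" using eH[OF sj ej] j unfolding nb_def by simp
      have sub: "{u. (x,u) \<in> Rem} \<subseteq> nb S x"
      proof (cases "j = 0")
        case False
        then obtain i where i: "j = Suc i" by (cases j, auto)
        have "odd i" using ej i by simp
        hence "(vs!Suc i, vs!i) \<in> S" using eS[of i] j i by simp
        thus ?thesis using RemN False i j unfolding nb_def by simp
      qed (simp add: RemN)
      have c: "card (nb ((S - Rem) \<union> Add) x) = card (nb S x) - card {u. (x,u) \<in> Rem} + 1"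
        unfolding nbeq AddN by (rule card_swap_one[OF finnb sub notin])
      have x0j: "x = x0 \<longleftrightarrow> j = 0" using inj[of j 0] j h m0 by auto
      show ?thesis
      proof (cases "j = 0")
        case True thus ?thesis using c x0j RemN by simp
      next
        case False
        hence "card {u. (x,u) \<in> Rem} = 1" using RemN by simp
        moreover have "card (nb S x) \<ge> 1" using sub finnb RemN False
          by (metis card_mono calculation)
        ultimately show ?thesis using c x0j False by simp
      qed
    qed
  qed
  show "card (ib ((S - Rem) \<union> Add) z) = card (ib S z) + (if z = last vs then 1 else 0)" if z: "z \<in> Y" for z
  proof -
    have ibeq: "ib ((S - Rem) \<union> Add) z = (ib S z - {u. (u,z) \<in> Rem}) \<union> {u. (u,z) \<in> Add}"
      unfolding ib_def by auto
    show ?thesis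
    proof (cases "z \<in> set vs")
      case False
      have "{u. (u,z) \<in> Rem} = {}" "{u. (u,z) \<in> Add} = {}"
        using False unfolding Rem_def' Add_def' m_def by (auto simp: in_set_conv_nth) (metis Suc_lessD nth_mem)+
      moreover have "z \<noteq> last vs" using False m0 unfolding m_def by (metis last_in_set length_0_conv less_not_refl)
      ultimately show ?thesis using ibeq by simp
    next
      case True
      then obtain j where j: "j < m" "vs ! j = z" unfolding m_def by (auto simp: in_set_conv_nth)
      have oj: "odd j" using parityY[OF a h, of j] j z unfolding m_def by simp
      then obtain i0 where i0: "j = Suc i0" by (cases j, auto)
      have ei0: "even i0" using oj i0 by simp
      have AddI: "{u. (u,z) \<in> Add} = {vs ! i0}"
      proof
        show "{u. (u,z) \<in> Add} \<subseteq> {vs ! i0}"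
        proof
          fix u assume "u \<in> {u. (u,z) \<in> Add}"
          then obtain i where i: "Suc i < m" "even i" "z = vs!Suc i" "u = vs!i" unfolding Add_def' by auto
          hence "Suc i = j" using inj[of "Suc i" j] j by simp
          thus "u \<in> {vs ! i0}" using i i0 by simp
        qed
        show "{vs ! i0} \<subseteq> {u. (u,z) \<in> Add}" unfolding Add_def' using j ei0 i0 by auto
      qed
      have RemI: "{u. (u,z) \<in> Rem} = (if Suc j < m then {vs ! Suc j} else {})"
      proof
        show "{u. (u,z) \<in> Rem} \<subseteq> (if Suc j < m then {vs ! Suc j} else {})"
        proof
          fix u assume "u \<in> {u. (u,z) \<in> Rem}"
          then obtain i where i: "Suc i < m" "odd i" "z = vs!i" "u = vs!Suc i" unfolding Rem_def' by auto
          hence "i = j" using inj[of i j] j by simp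
          thus "u \<in> (if Suc j < m then {vs ! Suc j} else {})" using i by auto
        qed
        show "(if Suc j < m then {vs ! Suc j} else {}) \<subseteq> {u. (u,z) \<in> Rem}"
          unfolding Rem_def' using j oj by auto
      qed
      have notin: "vs ! i0 \<notin> ib S z" using eH[of i0] j i0 ei0 unfolding ib_def by simp
      have sub: "{u. (u,z) \<in> Rem} \<subseteq> ib S z"
        using RemI eS[of j] oj j unfolding ib_def by auto
      have c: "card (ib ((S - Rem) \<union> Add) z) = card (ib S z) - card {u. (u,z) \<in> Rem} + 1"
        unfolding ibeq AddI by (rule card_swap_one[OF finib sub notin])
      have zl: "z = last vs \<longleftrightarrow> \<not> Suc j < m"
      proof
        assume "z = last vs" then have "j = m-1" using inj[of j "m-1"] j lastv m0 by simp
        thus "\<not> Suc j < m" using m0 by simp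
      next
        assume "\<not> Suc j < m" hence "j = m - 1" using j by simp
        thus "z = last vs" using j lastv by simp
      qed
      show ?thesis
      proof (cases "Suc j < m")
        case False thus ?thesis using c zl RemI by simp
      next
        case True
        hence "card {u. (u,z) \<in> Rem} = 1" using RemI by simp
        moreover have "card (ib S z) \<ge> 1" using sub finib RemI True
          by (metis card_mono calculation)
        ultimately show ?thesis using c zl True by simp
      qed
    qed
  qed
qed

end


lemma fin_nb: "finite S \<Longrightarrow> finite (nb S x)"
proof -
  assume "finite S"
  moreover have "nb S x = snd ` (S \<inter> ({x} \<times> UNIV))" unfolding nb_def by force
  ultimately show ?thesis by simp
qed

lemma fin_ib: "finite S \<Longrightarrow> finite (ib S x)"
proof -
  assume "finite S"
  moreover have "ib S x = fst ` (S \<inter> (UNIV \<times> {x}))" unfolding ib_def by force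
  ultimately show ?thesis by simp
qed

lemma card_rows:
  assumes S: "finite S" and A: "finite A"
  shows "card (S \<inter> (A \<times> UNIV)) = (\<Sum>x\<in>A. card (nb S x))"
proof -
  have eq: "S \<inter> (A \<times> UNIV) = (\<Union>x\<in>A. Pair x ` nb S x)" unfolding nb_def by auto
  have "card (\<Union>x\<in>A. Pair x ` nb S x) = (\<Sum>x\<in>A. card (Pair x ` nb S x))"
    by (rule card_UN_disjoint[OF A], insert fin_nb[OF S], auto)
  also have "\<dots> = (\<Sum>x\<in>A. card (nb S x))" by (intro sum.cong refl card_image, auto simp: inj_on_def)
  finally show ?thesis unfolding eq .
qed

lemma card_cols:
  assumes S: "finite S" and B: "finite B"
  shows "card (S \<inter> (UNIV \<times> B)) = (\<Sum>y\<in>B. card (ib S y))"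
proof -
  have eq: "S \<inter> (UNIV \<times> B) = (\<Union>y\<in>B. (\<lambda>u. (u,y)) ` ib S y)" unfolding ib_def by auto
  have "card (\<Union>y\<in>B. (\<lambda>u. (u,y)) ` ib S y) = (\<Sum>y\<in>B. card ((\<lambda>u. (u,y)) ` ib S y))"
    by (rule card_UN_disjoint[OF B], insert fin_ib[OF S], auto)
  also have "\<dots> = (\<Sum>y\<in>B. card (ib S y))" by (intro sum.cong refl card_image, auto simp: inj_on_def)
  finally show ?thesis unfolding eq .
qed

theorem ffactor:
  fixes X Y :: "nat set" and H :: "(nat \<times> nat) set" and f :: "nat \<Rightarrow> nat"
  assumes finX: "finite X" and finY: "finite Y" and disj: "X \<inter> Y = {}" and HXY: "H \<subseteq> X \<times> Y"
    and sums: "(\<Sum>v\<in>X. f v) = (\<Sum>v\<in>Y. f v)"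
    and cond: "\<And>A B. A \<subseteq> X \<Longrightarrow> B \<subseteq> Y \<Longrightarrow> (\<Sum>v\<in>A. f v) \<le> (\<Sum>v\<in>B. f v) + card (H \<inter> (A \<times> (Y - B)))"
  shows "\<exists>S. S \<subseteq> H \<and> (\<forall>x\<in>X. card (nb S x) = f x) \<and> (\<forall>y\<in>Y. card (ib S y) = f y)"
proof -
  have finH: "finite H" using finX finY HXY finite_subset[OF HXY] by simp
  define C where "C = {S. S \<subseteq> H \<and> (\<forall>x\<in>X. card (nb S x) \<le> f x) \<and> (\<forall>y\<in>Y. card (ib S y) \<le> f y)}"
  have finC: "finite C" unfolding C_def using finH by (simp add: finite_subset[of _ "Pow H"] subset_iff)
  have C0: "{} \<in> C" unfolding C_def nb_def ib_def by simp
  define M where "M = Max (card ` C)"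
  have "M \<in> card ` C" unfolding M_def using finC C0 by (intro Max_in, auto)
  then obtain S where SC: "S \<in> C" and SM: "card S = M" by auto
  have maxS: "card S' \<le> card S" if "S' \<in> C" for S'
    unfolding SM M_def using finC that by (intro Max_ge, auto)
  have SH: "S \<subseteq> H" and Sx: "\<And>x. x \<in> X \<Longrightarrow> card (nb S x) \<le> f x"
    and Sy: "\<And>y. y \<in> Y \<Longrightarrow> card (ib S y) \<le> f y" using SC unfolding C_def by auto
  have finS: "finite S" using finH SH finite_subset by auto
  have cardX: "card T = (\<Sum>x\<in>X. card (nb T x))" if "T \<subseteq> X \<times> Y" for T
  proof -
    have "finite T" using that finX finY finite_subset by (metis finite_cartesian_product)
    moreover have "T \<inter> (X \<times> UNIV) = T" using that by auto
    ultimately show ?thesis using card_rows[of T X] finX by simp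
  qed
  have cardY: "card T = (\<Sum>y\<in>Y. card (ib T y))" if "T \<subseteq> X \<times> Y" for T
  proof -
    have "finite T" using that finX finY finite_subset by (metis finite_cartesian_product)
    moreover have "T \<inter> (UNIV \<times> Y) = T" using that by auto
    ultimately show ?thesis using card_cols[of T Y] finY by simp
  qed
  have SXY: "S \<subseteq> X \<times> Y" using SH HXY by simp
  have satX: "\<forall>x\<in>X. card (nb S x) = f x"
  proof (rule ccontr)
    assume "\<not> ?thesis"
    then obtain x0 where x0: "x0 \<in> X" "card (nb S x0) \<noteq> f x0" by blast
    hence x0lt: "card (nb S x0) < f x0" using Sx[OF x0(1)] by simp
    interpret ffsetup X Y H S x0 by (unfold_locales, fact+)
    define R where "R = {z. \<exists>vs. altp S H vs \<and> vs ! 0 = x0 \<and> last vs = z}"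
    have "altp S H [x0]" unfolding altp_def by simp
    hence x0R: "x0 \<in> R" unfolding R_def by force
    have noaug: "f y \<le> card (ib S y)" if y: "y \<in> R" "y \<in> Y" for y
    proof (rule ccontr)
      assume "\<not> ?thesis"
      hence ylt: "card (ib S y) < f y" by simp
      from y obtain vs where vs: "altp S H vs" "vs ! 0 = x0" "last vs = y" unfolding R_def by auto
      define Add where "Add = {(vs!i, vs!Suc i) | i. Suc i < length vs \<and> even i}"
      define Rem where "Rem = {(vs!Suc i, vs!i) | i. Suc i < length vs \<and> odd i}"
      note aug = augment[OF vs(1,2), unfolded vs(3), OF y(2), folded Add_def Rem_def]
      define S' where "S' = (S - Rem) \<union> Add"
      have S'H: "S' \<subseteq> H" unfolding S'_def by (rule aug(1))
      have S'C: "S' \<in> C" unfolding C_def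
      proof (intro CollectI conjI ballI S'H)
        fix x assume x: "x \<in> X"
        show "card (nb S' x) \<le> f x" unfolding S'_def aug(2)[OF x] using Sx[OF x] x0lt
          by (cases "x = x0", auto)
      next
        fix z assume z: "z \<in> Y"
        show "card (ib S' z) \<le> f z" unfolding S'_def aug(3)[OF z] using Sy[OF z] ylt
          by (cases "z = y", auto)
      qed
      have "card S' = (\<Sum>x\<in>X. card (nb S' x))" by (rule cardX, insert S'H HXY, auto)
      also have "\<dots> = (\<Sum>x\<in>X. card (nb S x) + (if x = x0 then 1 else 0))"
        unfolding S'_def by (intro sum.cong refl aug(2))
      also have "\<dots> = card S + 1" unfolding sum.distrib cardX[OF SXY] using finX x0(1)
        by (simp add: sum.delta)
      finally have "card S' = card S + 1" .
      thus False using maxS[OF S'C] by simp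
    qed
    have lastR: "last vs = vs ! (length vs - 1)" if "vs \<noteq> []" for vs :: "nat list"
      using that by (simp add: last_conv_nth)
    have closA: "y \<in> R" if x: "x \<in> R" "x \<in> X" and e: "(x,y) \<in> H" "(x,y) \<notin> S" for x y
    proof -
      from x obtain vs where vs: "altp S H vs" "vs ! 0 = x0" "last vs = x" unfolding R_def by auto
      have ne: "vs \<noteq> []" using vs(1) unfolding altp_def by simp
      have xl: "vs ! (length vs - 1) \<in> X" using vs(3) x(2) lastR[OF ne] by simp
      have ev: "even (length vs - 1)" by (rule parityX[OF vs(1,2) _ xl], insert ne, simp)
      show ?thesis
      proof (cases "y \<in> set vs")
        case True
        then obtain j where j: "j < length vs" "vs ! j = y" by (auto simp: in_set_conv_nth)
        have "altp S H (take (Suc j) vs)" by (rule altp_take[OF vs(1)], insert j, auto)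
        moreover have "take (Suc j) vs ! 0 = x0" using vs(2) by simp
        moreover have "last (take (Suc j) vs) = y" using j by (simp add: take_Suc_conv_app_nth)
        ultimately show ?thesis unfolding R_def by blast
      next
        case False
        have "altp S H (vs @ [y])" by (rule altp_snoc[OF vs(1) False], insert ev vs(3) e, simp)
        moreover have "(vs @ [y]) ! 0 = x0" using vs(2) ne by (simp add: nth_append)
        ultimately show ?thesis unfolding R_def by force
      qed
    qed
    have closB: "x \<in> R" if y: "y \<in> R" "y \<in> Y" and e: "(x,y) \<in> S" for x y
    proof -
      from y obtain vs where vs: "altp S H vs" "vs ! 0 = x0" "last vs = y" unfolding R_def by auto
      have ne: "vs \<noteq> []" using vs(1) unfolding altp_def by simp
      have yl: "vs ! (length vs - 1) \<in> Y" using vs(3) y(2) lastR[OF ne] by simp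
      have od: "odd (length vs - 1)" by (rule parityY[OF vs(1,2) _ yl], insert ne, simp)
      show ?thesis
      proof (cases "x \<in> set vs")
        case True
        then obtain j where j: "j < length vs" "vs ! j = x" by (auto simp: in_set_conv_nth)
        have "altp S H (take (Suc j) vs)" by (rule altp_take[OF vs(1)], insert j, auto)
        moreover have "take (Suc j) vs ! 0 = x0" using vs(2) by simp
        moreover have "last (take (Suc j) vs) = x" using j by (simp add: take_Suc_conv_app_nth)
        ultimately show ?thesis unfolding R_def by blast
      next
        case False
        have "altp S H (vs @ [x])" by (rule altp_snoc[OF vs(1) False], insert od vs(3) e, simp)
        moreover have "(vs @ [x]) ! 0 = x0" using vs(2) ne by (simp add: nth_append)
        ultimately show ?thesis unfolding R_def by force
      qed
    qed
    define A where "A = R \<inter> X"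
    define B where "B = R \<inter> Y"
    have AX: "A \<subseteq> X" and BY: "B \<subseteq> Y" unfolding A_def B_def by auto
    have finA: "finite A" using AX finX finite_subset by auto
    have finB: "finite B" using BY finY finite_subset by auto
    have x0A: "x0 \<in> A" unfolding A_def using x0R x0(1) by simp
    have lt: "(\<Sum>x\<in>A. card (nb S x)) < (\<Sum>x\<in>A. f x)"
      by (rule sum_strict_mono_ex1[OF finA], insert AX Sx x0A x0lt, auto)
    have eqS: "S \<inter> (A \<times> UNIV) = (S \<inter> (UNIV \<times> B)) \<union> (H \<inter> (A \<times> (Y - B)))"
    proof
      show "S \<inter> (A \<times> UNIV) \<subseteq> (S \<inter> (UNIV \<times> B)) \<union> (H \<inter> (A \<times> (Y - B)))"
        using SH HXY by auto
      show "(S \<inter> (UNIV \<times> B)) \<union> (H \<inter> (A \<times> (Y - B))) \<subseteq> S \<inter> (A \<times> UNIV)"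
      proof
        fix p assume p: "p \<in> (S \<inter> (UNIV \<times> B)) \<union> (H \<inter> (A \<times> (Y - B)))"
        obtain x y where pxy: "p = (x,y)" by (cases p)
        show "p \<in> S \<inter> (A \<times> UNIV)"
        proof (cases "p \<in> S \<inter> (UNIV \<times> B)")
          case True
          hence "(x,y) \<in> S" "y \<in> R" "y \<in> Y" using pxy unfolding B_def by auto
          hence "x \<in> R" using closB by blast
          moreover have "x \<in> X" using \<open>(x,y) \<in> S\<close> SXY by auto
          ultimately show ?thesis using True pxy unfolding A_def by auto
        next
          case False
          with p pxy have h: "(x,y) \<in> H" "x \<in> A" "y \<in> Y" "y \<notin> B" by auto
          have "(x,y) \<in> S"
          proof (rule ccontr)
            assume "(x,y) \<notin> S"
            hence "y \<in> R" using closA[of x y] h unfolding A_def by auto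
            thus False using h unfolding B_def by auto
          qed
          thus ?thesis using h pxy by auto
        qed
      qed
    qed
    have disj2: "(S \<inter> (UNIV \<times> B)) \<inter> (H \<inter> (A \<times> (Y - B))) = {}" by auto
    have "(\<Sum>x\<in>A. card (nb S x)) = card (S \<inter> (A \<times> UNIV))" by (rule card_rows[OF finS finA, symmetric])
    also have "\<dots> = card (S \<inter> (UNIV \<times> B)) + card (H \<inter> (A \<times> (Y - B)))"
      unfolding eqS by (rule card_Un_disjoint, insert finS finH disj2, auto)
    also have "card (S \<inter> (UNIV \<times> B)) = (\<Sum>y\<in>B. card (ib S y))" by (rule card_cols[OF finS finB])
    also have "\<dots> = (\<Sum>y\<in>B. f y)"
      by (intro sum.cong refl antisym, insert Sy noaug BY, auto simp: B_def)
    finally have "(\<Sum>x\<in>A. card (nb S x)) = (\<Sum>y\<in>B. f y) + card (H \<inter> (A \<times> (Y - B)))" .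
    with lt cond[OF AX BY] show False by simp
  qed
  have satY: "\<forall>y\<in>Y. card (ib S y) = f y"
  proof (rule ccontr)
    assume "\<not> ?thesis"
    then obtain y0 where y0: "y0 \<in> Y" "card (ib S y0) \<noteq> f y0" by blast
    have "(\<Sum>y\<in>Y. card (ib S y)) < (\<Sum>y\<in>Y. f y)"
    proof (rule sum_strict_mono_ex1[OF finY])
      show "\<forall>y\<in>Y. card (ib S y) \<le> f y" using Sy by blast
      show "\<exists>a\<in>Y. card (ib S a) < f a" using Sy[OF y0(1)] y0 by (intro bexI[of _ y0], auto)
    qed
    moreover have "(\<Sum>y\<in>Y. card (ib S y)) = (\<Sum>x\<in>X. card (nb S x))"
      using cardX[OF SXY] cardY[OF SXY] by simp
    moreover have "(\<Sum>x\<in>X. card (nb S x)) = (\<Sum>x\<in>X. f x)" using satX by simp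
    ultimately show False using sums by simp
  qed
  show ?thesis using SH satX satY by blast
qed



lemma small_case:
  fixes D nn a b e eAB \<rho> \<alpha>' :: real
  assumes D: "D > 0" and nn: "nn > 0" and a: "a \<ge> 0" and b: "b \<ge> 0" and ab: "29 * b \<le> 30 * a"
    and an: "10 * a \<le> nn" and \<rho>: "\<rho> \<ge> 0" and ra: "\<rho> + \<alpha>' \<le> 1/100"
    and e1: "e \<ge> a * (D/5 - \<rho> * D) - eAB" and e2: "eAB \<le> D * a * b / nn + D / 12 * (a + b) / 2"
  shows "e \<ge> a * \<alpha>' * D"
proof -
  define t where "t = D * a"
  have t0: "t \<ge> 0" unfolding t_def using D a by simp
  have "b \<le> 3 / 29 * nn" using ab an by linarith
  hence "b / nn \<le> 3 / 29" using nn by (simp add: divide_le_eq)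
  hence t1: "t * (b / nn) \<le> t * (3 / 29)" using t0 by (intro mult_left_mono, auto)
  have t2: "D * b \<le> D * (30 / 29 * a)" using D ab by (intro mult_left_mono, auto)
  have t3: "t * (1/5 - \<rho> - 3/29 - 59/696 - \<alpha>') \<ge> 0"
    using t0 ra by (intro mult_nonneg_nonneg, auto)
  have r1: "a * (D/5 - \<rho> * D) = t / 5 - \<rho> * t" unfolding t_def by (simp add: algebra_simps)
  have r2: "D * a * b / nn = t * (b / nn)" unfolding t_def by simp
  have r3: "D / 12 * (a + b) / 2 = t / 24 + (D * b) / 24" unfolding t_def by (simp add: algebra_simps)
  have r4: "D * (30 / 29 * a) = 30/29 * t" unfolding t_def by simp
  have r5: "t * (1/5 - \<rho> - 3/29 - 59/696 - \<alpha>') = t/5 - \<rho> * t - 3/29 * t - 59/696 * t - \<alpha>' * t"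
    by (simp add: algebra_simps)
  have r6: "a * \<alpha>' * D = \<alpha>' * t" unfolding t_def by simp
  have r7: "t * (3 / 29) = 3/29 * t" by simp
  show ?thesis using e1 e2 t1 t2 t3 unfolding r1 r2 r3 r4 r5 r6 r7 by linarith
qed

lemma big_case:
  fixes D nn a c e eAC \<rho> \<alpha>' :: real
  assumes D: "D > 0" and nn: "nn > 0" and a: "a \<ge> 0" and ac: "a \<le> c"
    and an: "10 * a > nn" and \<rho>: "\<rho> \<ge> 0" and al: "\<alpha>' \<ge> 0" and ra: "\<rho> + \<alpha>' \<le> 1/100"
    and e1: "e \<ge> eAC - \<rho> * D * c" and e2: "eAC \<ge> D * a * c / nn - D / 12 * (a + c) / 2"
  shows "e \<ge> a * \<alpha>' * D"
proof -
  have c: "c \<ge> 0" using a ac by simp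
  define s where "s = D * c"
  define t where "t = D * a"
  have s0: "s \<ge> 0" unfolding s_def using D c by simp
  have "a / nn > 1/10" using an nn by (simp add: less_divide_eq)
  hence t1: "s * (a / nn) \<ge> s * (1/10)" using s0 by (intro mult_left_mono, auto)
  have t2: "t \<le> s" unfolding s_def t_def using D ac by (intro mult_left_mono, auto)
  have t3: "s * (1/60 - \<rho> - \<alpha>') \<ge> 0" using s0 ra by (intro mult_nonneg_nonneg, auto)
  have t4: "\<alpha>' * t \<le> \<alpha>' * s" using al t2 by (intro mult_left_mono, auto)
  have r1: "D * a * c / nn = s * (a / nn)" unfolding s_def by simp
  have r2: "D / 12 * (a + c) / 2 = t / 24 + s / 24" unfolding s_def t_def by (simp add: algebra_simps)
  have r3: "\<rho> * D * c = \<rho> * s" unfolding s_def by simp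
  have r4: "s * (1/60 - \<rho> - \<alpha>') = s / 60 - \<rho> * s - \<alpha>' * s" by (simp add: algebra_simps)
  have r5: "a * \<alpha>' * D = \<alpha>' * t" unfolding t_def by simp
  have r6: "s * (1/10) = s / 10" by simp
  show ?thesis using e1 e2 t1 t2 t3 t4 unfolding r1 r2 r3 r4 r5 r6 by linarith
qed


lemma arith_core:
  fixes D nn a b c k \<rho> \<alpha> \<gamma> \<alpha>' fA fB fC fA' e eAB eA'C eAC :: real
  assumes D: "D > 0" and nn: "nn > 0" and a: "a \<ge> 0" and b: "b \<ge> 0" and c: "c \<ge> 0"
    and bc: "b + c = k" and ak: "a \<le> k"
    and \<rho>: "\<rho> > 0" and ra: "\<rho> + \<alpha> \<le> 1/100" and \<gamma>0: "\<gamma> \<ge> 0" and \<gamma>1: "\<gamma> \<le> 1/30"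
    and al0: "\<alpha>' > 0" and al1: "\<alpha>' \<le> \<alpha>"
    and fA: "fA \<le> a * \<alpha>' * D" and fB: "fB \<ge> b * (1 - \<gamma>) * \<alpha>' * D"
    and fC: "fC \<le> c * \<alpha>' * D" and fA': "fA' \<ge> (k - a) * (1 - \<gamma>) * \<alpha>' * D"
    and feq: "fA - fB = fC - fA'"
    and e0: "e \<ge> 0"
    and eA1: "e \<ge> a * (D/5 - \<rho> * D) - eAB" and eA2: "eAB \<le> D * a * b / nn + D / 12 * (a + b) / 2"
    and eC1: "e \<ge> c * (D/5 - \<rho> * D) - eA'C" and eC2: "eA'C \<le> D * c * (k - a) / nn + D / 12 * (c + (k - a)) / 2"
    and eAC1: "e \<ge> eAC - \<rho> * D * c" and eAC2: "e \<ge> eAC - \<rho> * D * a"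
    and eAC3: "eAC \<ge> D * a * c / nn - D / 12 * (a + c) / 2"
  shows "fA \<le> fB + e"
proof -
  have ad: "\<alpha>' * D > 0" using al0 D by simp
  have g1: "1 - \<gamma> \<ge> 0" using \<gamma>1 by simp
  have fB0: "fB \<ge> 0" using fB b g1 ad
    by (metis (no_types) mult.assoc mult_nonneg_nonneg order_trans less_imp_le)
  have fA'0: "fA' \<ge> 0" using fA' ak g1 ad
    by (metis (no_types) diff_ge_0_iff_ge mult.assoc mult_nonneg_nonneg order_trans less_imp_le)
  have ra': "\<rho> + \<alpha>' \<le> 1/100" using ra al1 by simp
  show ?thesis
  proof (cases "a \<le> (1 - \<gamma>) * b")
    case True
    hence "a * (\<alpha>' * D) \<le> (1 - \<gamma>) * b * (\<alpha>' * D)" using ad by (intro mult_right_mono, auto)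
    hence "fA \<le> fB" using fA fB by (simp add: mult.assoc mult.commute mult.left_commute)
    thus ?thesis using e0 by simp
  next
    case nA: False
    show ?thesis
    proof (cases "c \<le> (1 - \<gamma>) * (k - a)")
      case True
      hence "c * (\<alpha>' * D) \<le> (1 - \<gamma>) * (k - a) * (\<alpha>' * D)" using ad by (intro mult_right_mono, auto)
      hence "fC \<le> fA'" using fC fA' by (simp add: mult.assoc mult.commute mult.left_commute)
      thus ?thesis using e0 feq by simp
    next
      case nC: False
      have h1: "29 * b \<le> 30 * a"
      proof -
        have "(1 - \<gamma>) * b \<ge> (29/30) * b" using \<gamma>1 b by (intro mult_right_mono, auto)
        thus ?thesis using nA by simp
      qed
      have h2: "29 * (k - a) \<le> 30 * c"
      proof -
        have "(1 - \<gamma>) * (k - a) \<ge> (29/30) * (k - a)" using \<gamma>1 ak by (intro mult_right_mono, auto)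
        thus ?thesis using nC by simp
      qed
      show ?thesis
      proof (cases "10 * a \<le> nn")
        case True
        have "e \<ge> a * \<alpha>' * D" by (rule small_case[OF D nn a b h1 True less_imp_le[OF \<rho>] ra' eA1 eA2])
        thus ?thesis using fA fB0 by simp
      next
        case nA2: False
        show ?thesis
        proof (cases "10 * c \<le> nn")
          case True
          have "e \<ge> c * \<alpha>' * D"
            by (rule small_case[OF D nn c _ h2 True less_imp_le[OF \<rho>] ra' eC1 eC2], insert ak, simp)
          thus ?thesis using fC fA'0 feq by simp
        next
          case nC2: False
          show ?thesis
          proof (cases "a \<le> c")
            case True
            have "e \<ge> a * \<alpha>' * D"
              by (rule big_case[OF D nn a True _ less_imp_le[OF \<rho>] less_imp_le[OF al0] ra' eAC1 eAC3], insert nA2, simp)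
            thus ?thesis using fA fB0 by simp
          next
            case False
            have eAC3': "eAC \<ge> D * c * a / nn - D / 12 * (c + a) / 2" using eAC3
              by (simp add: mult.commute mult.left_commute add.commute)
            have "e \<ge> c * \<alpha>' * D"
              by (rule big_case[OF D nn c _ _ less_imp_le[OF \<rho>] less_imp_le[OF al0] ra' eAC2 eAC3'], insert False nC2, auto)
            thus ?thesis using fC fA'0 feq by simp
          qed
        qed
      qed
    qed
  qed
qed



lemma bdeg_X: "T \<subseteq> X' \<times> Y' \<Longrightarrow> v \<notin> Y' \<Longrightarrow> bdeg T v = card (nb T v)"
proof -
  assume T: "T \<subseteq> X' \<times> Y'" and v: "v \<notin> Y'"
  have "{u. (u, v) \<in> T} = {}" using T v by auto
  thus ?thesis unfolding bdeg_def nb_def by simp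
qed

lemma bdeg_Y: "T \<subseteq> X' \<times> Y' \<Longrightarrow> v \<notin> X' \<Longrightarrow> bdeg T v = card (ib T v)"
proof -
  assume T: "T \<subseteq> X' \<times> Y'" and v: "v \<notin> X'"
  have "{u. (v, u) \<in> T} = {}" using T v by auto
  thus ?thesis unfolding bdeg_def ib_def by simp
qed

lemma eG_card:
  assumes A: "A \<subseteq> X" and B: "B \<subseteq> Y" and finA: "finite A" and finB: "finite B"
  shows "real (card (bip_edges E X Y \<inter> (A \<times> B))) = (\<Sum>i\<in>A. \<Sum>j\<in>B. if E i j then 1 else 0)"
proof -
  have "bip_edges E X Y \<inter> (A \<times> B) = Sigma A (\<lambda>i. {j\<in>B. E i j})"
    using A B unfolding bip_edges_def by auto
  hence "card (bip_edges E X Y \<inter> (A \<times> B)) = (\<Sum>i\<in>A. card {j\<in>B. E i j})"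
    using card_SigmaI[OF finA, of "\<lambda>i. {j\<in>B. E i j}"] finB by simp
  also have "real \<dots> = (\<Sum>i\<in>A. real (card {j\<in>B. E i j}))" by simp
  also have "\<dots> = (\<Sum>i\<in>A. \<Sum>j\<in>B. if E i j then 1 else 0)"
  proof (intro sum.cong refl)
    fix i
    have "(\<Sum>j\<in>B \<inter> {j. E i j}. (1::real)) = (\<Sum>j\<in>B. if j \<in> {j. E i j} then 1 else 0)"
      using sum.inter_restrict[OF finB, of "\<lambda>_. (1::real)" "{j. E i j}"] by simp
    moreover have "B \<inter> {j. E i j} = {j\<in>B. E i j}" by auto
    ultimately show "real (card {j\<in>B. E i j}) = (\<Sum>j\<in>B. if E i j then 1 else 0)" by simp
  qed
  finally show ?thesis .
qed

lemma mix_bounds: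
  fixes E :: "nat \<Rightarrow> nat \<Rightarrow> bool"
  assumes ndl: "ndl_graph n d lam E" and dpos: "d > 0" and lamd: "lam \<le> real d / 12"
    and S: "S \<subseteq> {0..<n}" and T: "T \<subseteq> {0..<n}"
  shows "(\<Sum>i\<in>S. \<Sum>j\<in>T. (if E i j then 1 else 0 :: real)) \<le> real d * real (card S) * real (card T) / real n + real d / 12 * (real (card S) + real (card T)) / 2"
    and "(\<Sum>i\<in>S. \<Sum>j\<in>T. (if E i j then 1 else 0 :: real)) \<ge> real d * real (card S) * real (card T) / real n - real d / 12 * (real (card S) + real (card T)) / 2"
proof -
  have lamd': "lam < real d" using lamd dpos by simp
  have S': "S \<subseteq> {..<n}" and T': "T \<subseteq> {..<n}" using S T by auto
  note m = graph_mixing[OF ndl dpos lamd' S' T']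
  have "lam * (real (card S) + real (card T)) / 2 \<le> real d / 12 * (real (card S) + real (card T)) / 2"
    using lamd by (intro divide_right_mono mult_right_mono, auto)
  thus "(\<Sum>i\<in>S. \<Sum>j\<in>T. (if E i j then 1 else 0 :: real)) \<le> real d * real (card S) * real (card T) / real n + real d / 12 * (real (card S) + real (card T)) / 2"
    and "(\<Sum>i\<in>S. \<Sum>j\<in>T. (if E i j then 1 else 0 :: real)) \<ge> real d * real (card S) * real (card T) / real n - real d / 12 * (real (card S) + real (card T)) / 2"
    using abs_le_D1[OF m] abs_le_D2[OF m] by linarith+
qed


lemma main_lemma:
  fixes \<rho> \<alpha> \<gamma> lam \<alpha>' :: real and n d :: nat and E :: "nat \<Rightarrow> nat \<Rightarrow> bool"
    and X Y X' Y' :: "nat set" and F :: "(nat \<times> nat) set" and f :: "nat \<Rightarrow> nat"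
  assumes \<rho>: "\<rho> > 0" and \<alpha>: "\<alpha> > 0" and \<gamma>: "\<gamma> > 0" and ra: "\<rho> + \<alpha> \<le> 1/100" and \<gamma>1: "\<gamma> \<le> 1/30"
    and ndl: "ndl_graph n d lam E" and lamd: "lam \<le> real d / 12"
    and XY: "X \<inter> Y = {}" "X \<union> Y = {0..<n}"
    and X': "X' \<subseteq> X" and Y': "Y' \<subseteq> Y" and kk: "card X' = card Y'"
    and deg: "\<forall>v\<in>X' \<union> Y'. real (bdeg (bip_edges E X Y \<inter> (X' \<times> Y')) v) \<ge> real d / 5"
    and F: "F \<subseteq> bip_edges E X Y \<inter> (X' \<times> Y')" and Fdeg: "\<forall>v\<in>X' \<union> Y'. real (bdeg F v) \<le> \<rho> * real d"
    and al: "0 < \<alpha>'" "\<alpha>' \<le> \<alpha>"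
    and fb: "\<forall>v\<in>X' \<union> Y'. (1 - \<gamma>) * \<alpha>' * real d \<le> real (f v) \<and> real (f v) \<le> \<alpha>' * real d"
    and fs: "(\<Sum>v\<in>X'. f v) = (\<Sum>v\<in>Y'. f v)"
  shows "\<exists>S. is_f_factor X' Y' (bip_edges E X Y \<inter> (X' \<times> Y') - F) f S"
proof -
  define H2 where "H2 = bip_edges E X Y \<inter> (X' \<times> Y')"
  define H1 where "H1 = H2 - F"
  have finX: "finite X" and finY: "finite Y" using XY(2) finite_subset[of _ "{0..<n}"] by auto
  have finX': "finite X'" and finY': "finite Y'" using X' Y' finX finY finite_subset by auto
  have disj: "X' \<inter> Y' = {}" using X' Y' XY(1) by auto
  have H2XY: "H2 \<subseteq> X' \<times> Y'" unfolding H2_def by auto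
  have H1XY: "H1 \<subseteq> X' \<times> Y'" unfolding H1_def using H2XY by auto
  have FH2: "F \<subseteq> H2" using F unfolding H2_def .
  have FXY: "F \<subseteq> X' \<times> Y'" using FH2 H2XY by auto
  have finH2: "finite H2" using H2XY finX' finY' finite_subset by (metis finite_cartesian_product)
  have finH1: "finite H1" using finH2 unfolding H1_def by simp
  have finF: "finite F" using finH2 FH2 finite_subset by auto
  have cond: "(\<Sum>v\<in>A. f v) \<le> (\<Sum>v\<in>B. f v) + card (H1 \<inter> (A \<times> (Y' - B)))"
    if A: "A \<subseteq> X'" and B: "B \<subseteq> Y'" for A B
  proof (cases "d = 0 \<or> n = 0")
    case True
    have "f v = 0" if v: "v \<in> A" for v
    proof (cases "d = 0")
      case True thus ?thesis using fb v A by force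
    next
      case False
      hence "n = 0" using \<open>d = 0 \<or> n = 0\<close> by simp
      thus ?thesis using v A X' XY(2) by auto
    qed
    thus ?thesis by simp
  next
    case False
    hence dpos: "d > 0" and npos: "n > 0" by auto
    define D where "D = real d"
    have D: "D > 0" unfolding D_def using dpos by simp
    define C where "C = Y' - B"
    define A' where "A' = X' - A"
    have finA: "finite A" and finB: "finite B" and finC: "finite C" and finA': "finite A'"
      using A B finX' finY' finite_subset unfolding C_def A'_def by auto
    have AX: "A \<subseteq> X" and BY: "B \<subseteq> Y" and CY: "C \<subseteq> Y" and A'X: "A' \<subseteq> X"
      using A B X' Y' unfolding C_def A'_def by auto
    have Xn: "X \<subseteq> {0..<n}" and Yn: "Y \<subseteq> {0..<n}" using XY(2) by auto
    define k where "k = real (card Y')"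
    have cB: "real (card B) + real (card C) = k"
      unfolding k_def C_def using card_Diff_subset[OF finB B] card_mono[OF finY' B] by simp
    have cA: "real (card A') = k - real (card A)"
      unfolding k_def A'_def using card_Diff_subset[OF finA A] card_mono[OF finX' A] kk by simp
    have ak: "real (card A) \<le> k" using cA by simp
    have fA: "(\<Sum>v\<in>A. real (f v)) \<le> real (card A) * \<alpha>' * D"
    proof -
      have "(\<Sum>v\<in>A. real (f v)) \<le> (\<Sum>v\<in>A. \<alpha>' * D)" using fb A unfolding D_def by (intro sum_mono, auto)
      thus ?thesis by simp
    qed
    have fB: "(\<Sum>v\<in>B. real (f v)) \<ge> real (card B) * (1 - \<gamma>) * \<alpha>' * D"
    proof -
      have "(\<Sum>v\<in>B. real (f v)) \<ge> (\<Sum>v\<in>B. (1 - \<gamma>) * \<alpha>' * D)" using fb B unfolding D_def by (intro sum_mono, auto)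
      thus ?thesis by (simp add: mult.assoc)
    qed
    have fC: "(\<Sum>v\<in>C. real (f v)) \<le> real (card C) * \<alpha>' * D"
    proof -
      have "(\<Sum>v\<in>C. real (f v)) \<le> (\<Sum>v\<in>C. \<alpha>' * D)" using fb unfolding D_def C_def by (intro sum_mono, auto)
      thus ?thesis by simp
    qed
    have fA': "(\<Sum>v\<in>A'. real (f v)) \<ge> (k - real (card A)) * (1 - \<gamma>) * \<alpha>' * D"
    proof -
      have "(\<Sum>v\<in>A'. real (f v)) \<ge> (\<Sum>v\<in>A'. (1 - \<gamma>) * \<alpha>' * D)" using fb unfolding D_def A'_def by (intro sum_mono, auto)
      thus ?thesis using cA by (simp add: mult.assoc)
    qed
    have feq: "(\<Sum>v\<in>A. real (f v)) - (\<Sum>v\<in>B. real (f v)) = (\<Sum>v\<in>C. real (f v)) - (\<Sum>v\<in>A'. real (f v))"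
    proof -
      have "(\<Sum>v\<in>X'. real (f v)) = (\<Sum>v\<in>A'. real (f v)) + (\<Sum>v\<in>A. real (f v))"
        unfolding A'_def by (rule sum.subset_diff[OF A finX'])
      moreover have "(\<Sum>v\<in>Y'. real (f v)) = (\<Sum>v\<in>C. real (f v)) + (\<Sum>v\<in>B. real (f v))"
        unfolding C_def by (rule sum.subset_diff[OF B finY'])
      moreover have "(\<Sum>v\<in>X'. real (f v)) = (\<Sum>v\<in>Y'. real (f v))" using fs
        by (metis of_nat_sum)
      ultimately show ?thesis by simp
    qed
    have dX: "real (card (nb H1 x)) \<ge> D/5 - \<rho> * D" if x: "x \<in> X'" for x
    proof -
      have xY: "x \<notin> Y'" using x disj by auto
      have "nb H1 x = nb H2 x - nb F x" unfolding H1_def nb_def by auto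
      moreover have "nb F x \<subseteq> nb H2 x" using FH2 unfolding nb_def by auto
      ultimately have "card (nb H1 x) = card (nb H2 x) - card (nb F x)" "card (nb F x) \<le> card (nb H2 x)"
        using card_Diff_subset[OF fin_nb[OF finF]] card_mono[OF fin_nb[OF finH2]] by auto
      moreover have "real (bdeg H2 x) \<ge> D/5" using deg x unfolding H2_def D_def by auto
      hence "real (card (nb H2 x)) \<ge> D/5" using bdeg_X[OF H2XY xY] by simp
      moreover have "real (bdeg F x) \<le> \<rho> * D" using Fdeg x unfolding D_def by auto
      hence "real (card (nb F x)) \<le> \<rho> * D" using bdeg_X[OF FXY xY] by simp
      ultimately show ?thesis by (simp add: of_nat_diff)
    qed
    have dY: "real (card (ib H1 y)) \<ge> D/5 - \<rho> * D" if y: "y \<in> Y'" for y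
    proof -
      have yX: "y \<notin> X'" using y disj by auto
      have "ib H1 y = ib H2 y - ib F y" unfolding H1_def ib_def by auto
      moreover have "ib F y \<subseteq> ib H2 y" using FH2 unfolding ib_def by auto
      ultimately have "card (ib H1 y) = card (ib H2 y) - card (ib F y)" "card (ib F y) \<le> card (ib H2 y)"
        using card_Diff_subset[OF fin_ib[OF finF]] card_mono[OF fin_ib[OF finH2]] by auto
      moreover have "real (bdeg H2 y) \<ge> D/5" using deg y unfolding H2_def D_def by auto
      hence "real (card (ib H2 y)) \<ge> D/5" using bdeg_Y[OF H2XY yX] by simp
      moreover have "real (bdeg F y) \<le> \<rho> * D" using Fdeg y unfolding D_def by auto
      hence "real (card (ib F y)) \<le> \<rho> * D" using bdeg_Y[OF FXY yX] by simp
      ultimately show ?thesis by (simp add: of_nat_diff)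
    qed
    define e where "e = real (card (H1 \<inter> (A \<times> C)))"
    define eAB where "eAB = (\<Sum>i\<in>A. \<Sum>j\<in>B. (if E i j then 1 else 0 :: real))"
    define eA'C where "eA'C = (\<Sum>i\<in>A'. \<Sum>j\<in>C. (if E i j then 1 else 0 :: real))"
    define eAC where "eAC = (\<Sum>i\<in>A. \<Sum>j\<in>C. (if E i j then 1 else 0 :: real))"
    have e0: "e \<ge> 0" unfolding e_def by simp
    have eA1: "e \<ge> real (card A) * (D/5 - \<rho> * D) - eAB"
    proof -
      have "(\<Sum>x\<in>A. real (card (nb H1 x))) \<ge> (\<Sum>x\<in>A. D/5 - \<rho> * D)" using dX A by (intro sum_mono, auto)
      hence s1: "(\<Sum>x\<in>A. real (card (nb H1 x))) \<ge> real (card A) * (D/5 - \<rho> * D)" by simp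
      have "card (H1 \<inter> (A \<times> UNIV)) = (\<Sum>x\<in>A. card (nb H1 x))" by (rule card_rows[OF finH1 finA])
      moreover have "H1 \<inter> (A \<times> UNIV) = (H1 \<inter> (A \<times> B)) \<union> (H1 \<inter> (A \<times> C))"
        using H1XY B unfolding C_def by auto
      moreover have "card ((H1 \<inter> (A \<times> B)) \<union> (H1 \<inter> (A \<times> C))) = card (H1 \<inter> (A \<times> B)) + card (H1 \<inter> (A \<times> C))"
        by (rule card_Un_disjoint, insert finH1, auto simp: C_def)
      ultimately have s2: "real (card (H1 \<inter> (A \<times> B))) + e = (\<Sum>x\<in>A. real (card (nb H1 x)))"
        unfolding e_def by (metis of_nat_add of_nat_sum)
      have "H1 \<inter> (A \<times> B) \<subseteq> bip_edges E X Y \<inter> (A \<times> B)" unfolding H1_def H2_def by auto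
      hence "card (H1 \<inter> (A \<times> B)) \<le> card (bip_edges E X Y \<inter> (A \<times> B))"
        by (intro card_mono, insert finA finB, auto intro: finite_subset[of _ "A \<times> B"])
      hence "real (card (H1 \<inter> (A \<times> B))) \<le> eAB" unfolding eAB_def eG_card[OF AX BY finA finB, symmetric] by simp
      thus ?thesis using s1 s2 by simp
    qed
    have eC1: "e \<ge> real (card C) * (D/5 - \<rho> * D) - eA'C"
    proof -
      have "(\<Sum>y\<in>C. real (card (ib H1 y))) \<ge> (\<Sum>y\<in>C. D/5 - \<rho> * D)" using dY unfolding C_def by (intro sum_mono, auto)
      hence s1: "(\<Sum>y\<in>C. real (card (ib H1 y))) \<ge> real (card C) * (D/5 - \<rho> * D)" by simp
      have "card (H1 \<inter> (UNIV \<times> C)) = (\<Sum>y\<in>C. card (ib H1 y))" by (rule card_cols[OF finH1 finC])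
      moreover have "H1 \<inter> (UNIV \<times> C) = (H1 \<inter> (A \<times> C)) \<union> (H1 \<inter> (A' \<times> C))"
        using H1XY A unfolding A'_def by auto
      moreover have "card ((H1 \<inter> (A \<times> C)) \<union> (H1 \<inter> (A' \<times> C))) = card (H1 \<inter> (A \<times> C)) + card (H1 \<inter> (A' \<times> C))"
        by (rule card_Un_disjoint, insert finH1, auto simp: A'_def)
      ultimately have s2: "e + real (card (H1 \<inter> (A' \<times> C))) = (\<Sum>y\<in>C. real (card (ib H1 y)))"
        unfolding e_def by (metis of_nat_add of_nat_sum)
      have "H1 \<inter> (A' \<times> C) \<subseteq> bip_edges E X Y \<inter> (A' \<times> C)" unfolding H1_def H2_def by auto
      hence "card (H1 \<inter> (A' \<times> C)) \<le> card (bip_edges E X Y \<inter> (A' \<times> C))"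
        by (intro card_mono, insert finA' finC, auto intro: finite_subset[of _ "A' \<times> C"])
      hence "real (card (H1 \<inter> (A' \<times> C))) \<le> eA'C" unfolding eA'C_def eG_card[OF A'X CY finA' finC, symmetric] by simp
      thus ?thesis using s1 s2 by simp
    qed
    have eACe: "e = eAC - real (card (F \<inter> (A \<times> C)))"
    proof -
      have "H1 \<inter> (A \<times> C) = (H2 \<inter> (A \<times> C)) - (F \<inter> (A \<times> C))" unfolding H1_def by auto
      moreover have sub: "F \<inter> (A \<times> C) \<subseteq> H2 \<inter> (A \<times> C)" using FH2 by auto
      moreover have fin: "finite (F \<inter> (A \<times> C))" using finF by simp
      ultimately have "card (H1 \<inter> (A \<times> C)) = card (H2 \<inter> (A \<times> C)) - card (F \<inter> (A \<times> C))"
        "card (F \<inter> (A \<times> C)) \<le> card (H2 \<inter> (A \<times> C))"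
        using card_Diff_subset[OF fin sub] card_mono[OF _ sub] finH2 by auto
      moreover have "H2 \<inter> (A \<times> C) = bip_edges E X Y \<inter> (A \<times> C)"
        unfolding H2_def using A unfolding C_def by auto
      ultimately show ?thesis unfolding e_def eAC_def eG_card[OF AX CY finA finC, symmetric]
        by (simp add: of_nat_diff)
    qed
    have FA: "real (card (F \<inter> (A \<times> C))) \<le> \<rho> * D * real (card A)"
    proof -
      have "card (F \<inter> (A \<times> C)) \<le> card (F \<inter> (A \<times> UNIV))" by (intro card_mono, insert finF, auto)
      also have "\<dots> = (\<Sum>x\<in>A. card (nb F x))" by (rule card_rows[OF finF finA])
      finally have "real (card (F \<inter> (A \<times> C))) \<le> (\<Sum>x\<in>A. real (card (nb F x)))" by (metis of_nat_le_iff of_nat_sum)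
      also have "\<dots> \<le> (\<Sum>x\<in>A. \<rho> * D)"
      proof (intro sum_mono)
        fix x assume x: "x \<in> A"
        hence "x \<in> X'" "x \<notin> Y'" using A disj by auto
        moreover have "real (bdeg F x) \<le> \<rho> * D" using Fdeg \<open>x \<in> X'\<close> unfolding D_def by auto
        ultimately show "real (card (nb F x)) \<le> \<rho> * D" using bdeg_X[OF FXY] by simp
      qed
      finally show ?thesis by (simp add: mult.commute)
    qed
    have FC: "real (card (F \<inter> (A \<times> C))) \<le> \<rho> * D * real (card C)"
    proof -
      have "card (F \<inter> (A \<times> C)) \<le> card (F \<inter> (UNIV \<times> C))" by (intro card_mono, insert finF, auto)
      also have "\<dots> = (\<Sum>y\<in>C. card (ib F y))" by (rule card_cols[OF finF finC])
      finally have "real (card (F \<inter> (A \<times> C))) \<le> (\<Sum>y\<in>C. real (card (ib F y)))" by (metis of_nat_le_iff of_nat_sum)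
      also have "\<dots> \<le> (\<Sum>y\<in>C. \<rho> * D)"
      proof (intro sum_mono)
        fix y assume y: "y \<in> C"
        hence "y \<in> Y'" "y \<notin> X'" using disj unfolding C_def by auto
        moreover have "real (bdeg F y) \<le> \<rho> * D" using Fdeg \<open>y \<in> Y'\<close> unfolding D_def by auto
        ultimately show "real (card (ib F y)) \<le> \<rho> * D" using bdeg_Y[OF FXY] by simp
      qed
      finally show ?thesis by (simp add: mult.commute)
    qed
    have An: "A \<subseteq> {0..<n}" and Bn: "B \<subseteq> {0..<n}" and Cn: "C \<subseteq> {0..<n}" and A'n: "A' \<subseteq> {0..<n}"
      using AX BY CY A'X Xn Yn by auto
    have eA2: "eAB \<le> D * real (card A) * real (card B) / real n + D / 12 * (real (card A) + real (card B)) / 2"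
      unfolding eAB_def D_def by (rule mix_bounds(1)[OF ndl dpos lamd An Bn])
    have eC2: "eA'C \<le> D * real (card C) * (k - real (card A)) / real n + D / 12 * (real (card C) + (k - real (card A))) / 2"
      using mix_bounds(1)[OF ndl dpos lamd A'n Cn] unfolding eA'C_def D_def[symmetric] cA
      by (simp add: mult.commute mult.left_commute add.commute)
    have eAC3: "eAC \<ge> D * real (card A) * real (card C) / real n - D / 12 * (real (card A) + real (card C)) / 2"
      unfolding eAC_def D_def by (rule mix_bounds(2)[OF ndl dpos lamd An Cn])
    have eAC1: "e \<ge> eAC - \<rho> * D * real (card C)" using eACe FC by simp
    have eAC2: "e \<ge> eAC - \<rho> * D * real (card A)" using eACe FA by simp
    have nn: "real n > 0" using npos by simp
    have "(\<Sum>v\<in>A. real (f v)) \<le> (\<Sum>v\<in>B. real (f v)) + e"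
      by (rule arith_core[OF D nn _ _ _ cB ak \<rho> ra less_imp_le[OF \<gamma>] \<gamma>1 al fA fB fC fA' feq e0 eA1 eA2
            eC1 eC2 eAC1 eAC2 eAC3], auto)
    hence "real (\<Sum>v\<in>A. f v) \<le> real ((\<Sum>v\<in>B. f v) + card (H1 \<inter> (A \<times> C)))" unfolding e_def by simp
    thus ?thesis unfolding C_def by linarith
  qed
  obtain S where S: "S \<subseteq> H1" and SX: "\<forall>x\<in>X'. card (nb S x) = f x" and SY: "\<forall>y\<in>Y'. card (ib S y) = f y"
    using ffactor[OF finX' finY' disj H1XY fs cond] by blast
  have SXY: "S \<subseteq> X' \<times> Y'" using S H1XY by auto
  have "is_f_factor X' Y' H1 f S"
    unfolding is_f_factor_def
  proof (intro conjI ballI S)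
    fix v assume v: "v \<in> X' \<union> Y'"
    show "bdeg S v = f v"
    proof (cases "v \<in> X'")
      case True
      hence "v \<notin> Y'" using disj by auto
      thus ?thesis using bdeg_X[OF SXY] SX True by simp
    next
      case False
      hence "v \<in> Y'" using v by simp
      thus ?thesis using bdeg_Y[OF SXY False] SY by simp
    qed
  qed
  thus ?thesis unfolding H1_def H2_def by blast
qed


theorem lemma4p5:
  fixes \<rho> \<alpha> \<gamma> lam :: real and n d :: nat and E :: "nat \<Rightarrow> nat \<Rightarrow> bool"
  assumes "\<rho> > 0" "\<alpha> > 0" "\<gamma> > 0" "\<rho> + \<alpha> \<le> 1/100" "\<gamma> \<le> 1/30"
    and "ndl_graph n d lam E" and "even n" and "lam \<le> real d / 12"
  shows "\<forall>X Y. X \<inter> Y = {} \<and> X \<union> Y = {0..<n} \<and> card X = card Y \<longrightarrow>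
           good X Y (bip_edges E X Y) (real d) \<rho> \<alpha> \<gamma>"
proof (intro allI impI)
  fix X Y :: "nat set"
  assume XY: "X \<inter> Y = {} \<and> X \<union> Y = {0..<n} \<and> card X = card Y"
  show "good X Y (bip_edges E X Y) (real d) \<rho> \<alpha> \<gamma>"
    unfolding good_def
  proof (intro allI impI)
    fix X' Y' :: "nat set"
    assume H: "X' \<subseteq> X \<and> Y' \<subseteq> Y \<and> card X' = card Y' \<and>
        (\<forall>v\<in>X' \<union> Y'. real (bdeg (bip_edges E X Y \<inter> (X' \<times> Y')) v) \<ge> real d / 5)"
    show "robustly_matchable X' Y' (bip_edges E X Y \<inter> (X' \<times> Y')) (real d) \<rho> \<alpha> \<gamma>"
      unfolding robustly_matchable_def
    proof (intro allI impI)
      fix F \<alpha>' f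
      assume F: "F \<subseteq> bip_edges E X Y \<inter> (X' \<times> Y') \<and> (\<forall>v\<in>X' \<union> Y'. real (bdeg F v) \<le> \<rho> * real d) \<and> 0 < \<alpha>' \<and> \<alpha>' \<le> \<alpha>"
      assume fb: "(\<forall>v\<in>X' \<union> Y'. (1 - \<gamma>) * \<alpha>' * real d \<le> real (f v) \<and> real (f v) \<le> \<alpha>' * real d) \<and>
          (\<Sum>v\<in>X'. f v) = (\<Sum>v\<in>Y'. f v)"
      show "\<exists>S. is_f_factor X' Y' (bip_edges E X Y \<inter> (X' \<times> Y') - F) f S"
        by (rule main_lemma[OF assms(1-6) assms(8)], insert XY H F fb, auto)
    qed
  qed
qed


end
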